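(* The map $\mathbf w\mapsto\overleftarrow{\tilde{\mathbf w}}$ is a bijection from $\textsc{adm}_B$ onto $\textsc{adm}_F$; i.e. $\mathbf w\in\textsc{adm}_B$ if and only if $\overleftarrow{\tilde{\mathbf w}}\in\textsc{adm}_F$.
   Context: $G=(\mathcal V,\mathcal E)$ is a finite connected simple graph. Model: item classes $V_1,V_2,\dots$ i.i.d. of a full-support law $\mu$ arrive one at a time to an initially empty system; an arriving item is matched with the oldest present item whose class is adjacent to its own (First Come First Matched), if any, both leaving; otherwise it waits. $W_n$ is the word of classes of unmatched items after time $n$. $\tilde{\mathcal V}=\{\tilde a:a\in\mathcal V\}$ is a disjoint copy with $\tilde{\tilde a}=a$, $\mathbf V=\mathcal V\cup\tilde{\mathcal V}$; for $\mathbf w=\mathbf w_1\cdots\mathbf w_q$, $\tilde{\mathbf w}=\tilde{\mathbf w}_1\cdots\tilde{\mathbf w}_q$ and $\overleftarrow{\mathbf w}=\mathbf w_q\cdots\mathbf w_1$. Backwards detailed chain: $B_0=\emptyset$; if $W_n=\emptyset$ then $B_n=\emptyset$; otherwise with $i(n)$ the index of the oldest unmatched item, $B_n$ has length $n-i(n)+1$, $\ell$-th letter $V_{i(n)+\ell-1}$ if that item is unmatched at time $n$ and $\tilde V_k$ if it has been matched by time $n$ with item $k$. Forwards detailed chain: $F_0=\emptyset$; if $W_n=\emptyset$ then $F_n=\emptyset$; otherwise with $j(n)>n$ the largest index of an item matched with an item arrived up to $n$, $F_n$ has length $j(n)-n$, $\ell$-th letter $V_{n+\ell}$ if item $n+\ell$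 is not matched with an item arrived up to $n$ and $\tilde V_k$ if it is matched with item $k\le n$. $\textsc{adm}_B$, $\textsc{adm}_F$ are the sets of states reachable by $(B_n)$, $(F_n)$ respectively. *)

theory Defs
  imports Main
begin

text \<open>Letters of the alphabet V-bold = V plus a disjoint copy V-tilde.\<close>
datatype 'a letter = Pl 'a | Ti 'a

fun tilde :: "'a letter \<Rightarrow> 'a letter" where
  "tilde (Pl a) = Ti a"
| "tilde (Ti a) = Pl a"

text \<open>Items are indexed 1,2,...; item t has class v t.
  run E v n = (queue of unmatched items (index, class) in arrival order,
               list of matched pairs (earlier index, later index)) after n arrivals.\<close>
fun run :: "('a \<Rightarrow> 'a \<Rightarrow> bool) \<Rightarrow> (nat \<Rightarrow> 'a) \<Rightarrow> nat \<Rightarrow> (nat \<times> 'a) list \<times> (nat \<times> nat) list" where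
  "run E v 0 = ([], [])"
| "run E v (Suc n) =
     (let (Q, M) = run E v n; c = v (Suc n) in
      case find (\<lambda>p. E (snd p) c) Q of
        None \<Rightarrow> (Q @ [(Suc n, c)], M)
      | Some p \<Rightarrow> (remove1 p Q, (fst p, Suc n) # M))"

definition unmatched_word :: "('a \<Rightarrow> 'a \<Rightarrow> bool) \<Rightarrow> (nat \<Rightarrow> 'a) \<Rightarrow> nat \<Rightarrow> 'a list" where
  "unmatched_word E v n = map snd (fst (run E v n))"

definition matched_by :: "('a \<Rightarrow> 'a \<Rightarrow> bool) \<Rightarrow> (nat \<Rightarrow> 'a) \<Rightarrow> nat \<Rightarrow> nat \<Rightarrow> nat \<Rightarrow> bool" where
  "matched_by E v n k l \<longleftrightarrow> (k, l) \<in> set (snd (run E v n)) \<or> (l, k) \<in> set (snd (run E v n))"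

definition ever_matched :: "('a \<Rightarrow> 'a \<Rightarrow> bool) \<Rightarrow> (nat \<Rightarrow> 'a) \<Rightarrow> nat \<Rightarrow> nat \<Rightarrow> bool" where
  "ever_matched E v k l \<longleftrightarrow> (\<exists>m. matched_by E v m k l)"

definition Bstate :: "('a \<Rightarrow> 'a \<Rightarrow> bool) \<Rightarrow> (nat \<Rightarrow> 'a) \<Rightarrow> nat \<Rightarrow> 'a letter list" where
  "Bstate E v n =
     (if fst (run E v n) = [] then []
      else map (\<lambda>t. if \<exists>l. matched_by E v n t l
                     then Ti (v (THE l. matched_by E v n t l)) else Pl (v t))
               [fst (hd (fst (run E v n))) ..< Suc n])"

text \<open>F_n is defined when W_n is empty, or when every item unmatched at time n
  is eventually matched (so that j(n) exists).\<close>
definition Fdefined :: "('a \<Rightarrow> 'a \<Rightarrow> bool) \<Rightarrow> (nat \<Rightarrow> 'a) \<Rightarrow> nat \<Rightarrow> bool" where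
  "Fdefined E v n \<longleftrightarrow> (\<forall>p \<in> set (fst (run E v n)). \<exists>l. ever_matched E v (fst p) l)"

definition jidx :: "('a \<Rightarrow> 'a \<Rightarrow> bool) \<Rightarrow> (nat \<Rightarrow> 'a) \<Rightarrow> nat \<Rightarrow> nat" where
  "jidx E v n = Max {l. \<exists>k. 1 \<le> k \<and> k \<le> n \<and> ever_matched E v k l}"

definition Fstate :: "('a \<Rightarrow> 'a \<Rightarrow> bool) \<Rightarrow> (nat \<Rightarrow> 'a) \<Rightarrow> nat \<Rightarrow> 'a letter list" where
  "Fstate E v n =
     (if fst (run E v n) = [] then []
      else map (\<lambda>t. if \<exists>k. 1 \<le> k \<and> k \<le> n \<and> ever_matched E v k t
                     then Ti (v (THE k. 1 \<le> k \<and> k \<le> n \<and> ever_matched E v k t)) else Pl (v t))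
               [Suc n ..< Suc (jidx E v n)])"

text \<open>Reachable states. Since the arrival law has full support on V, a state is reached
  with positive probability iff it is produced by some arrival sequence with values in V.\<close>
definition admB :: "'a set \<Rightarrow> ('a \<Rightarrow> 'a \<Rightarrow> bool) \<Rightarrow> 'a letter list set" where
  "admB V E = {w. \<exists>v n. (\<forall>i. v i \<in> V) \<and> Bstate E v n = w}"

definition admF :: "'a set \<Rightarrow> ('a \<Rightarrow> 'a \<Rightarrow> bool) \<Rightarrow> 'a letter list set" where
  "admF V E = {w. \<exists>v n. (\<forall>i. v i \<in> V) \<and> Fdefined E v n \<and> Fstate E v n = w}"

definition simple_connected_graph :: "'a set \<Rightarrow> ('a \<Rightarrow> 'a \<Rightarrow> bool) \<Rightarrow> bool" where
  "simple_connected_graph V E \<longleftrightarrow>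
     finite V \<and> V \<noteq> {} \<and>
     (\<forall>x y. E x y \<longrightarrow> x \<in> V \<and> y \<in> V) \<and>
     (\<forall>x y. E x y \<longrightarrow> E y x) \<and> (\<forall>x. \<not> E x x) \<and>
     (\<forall>x\<in>V. \<forall>y\<in>V. E\<^sup>*\<^sup>* x y)"

end

theory Submission
  imports Defs
begin

lemma sorted_wrt_remove1: "sorted_wrt P xs \<Longrightarrow> sorted_wrt P (remove1 x xs)"
  by (induction xs) (auto dest: subsetD[OF set_remove1_subset])

lemma sorted_fst_distinct: "sorted_wrt (\<lambda>p q. fst p < (fst q::nat)) xs \<Longrightarrow> distinct (map fst xs)"
  by (induction xs) auto

lemma sorted_fst_distinct': "sorted_wrt (\<lambda>p q. fst p < (fst q::nat)) xs \<Longrightarrow> distinct xs"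
  using sorted_fst_distinct distinct_map by blast

definition itemsM :: "(nat \<times> nat) list \<Rightarrow> nat set" where
  "itemsM M = fst ` set M \<union> snd ` set M"

lemma find_before: "find (\<lambda>p. E (snd p) c) xs = Some p \<Longrightarrow> sorted_wrt (\<lambda>p q. fst p < (fst q::nat)) xs \<Longrightarrow>
   q \<in> set xs \<Longrightarrow> fst q < fst p \<Longrightarrow> \<not> E (snd q) c"
proof -
  assume a: "find (\<lambda>p. E (snd p) c) xs = Some p" "sorted_wrt (\<lambda>p q. fst p < (fst q::nat)) xs"
     "q \<in> set xs" "fst q < fst p"
  obtain i where i: "i < length xs" "E (snd (xs ! i)) c" "p = xs ! i" "\<forall>j<i. \<not> E (snd (xs ! j)) c"
    using a(1) unfolding find_Some_iff by blast
  obtain j where j: "j < length xs" "q = xs ! j" using a(3) by (metis in_set_conv_nth)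
  have "j < i"
  proof (rule ccontr)
    assume "\<not> j < i"
    then have "i \<le> j" by simp
    then have "fst (xs ! i) \<le> fst (xs ! j)" using a(2) j(1)
      by (metis le_eq_less_or_eq order.strict_implies_order sorted_wrt_nth_less)
    then show False using a(4) i(3) j(2) by simp
  qed
  then show ?thesis using i j by blast
qed

lemma find_found: "find P xs = Some p \<Longrightarrow> p \<in> set xs \<and> P p"
  unfolding find_Some_iff by auto

lemma find_le: "q \<in> set xs \<Longrightarrow> P q \<Longrightarrow> sorted_wrt (\<lambda>p q. fst p < (fst q::nat)) xs \<Longrightarrow>
   \<exists>p. find P xs = Some p \<and> fst p \<le> fst q"
proof -
  assume a: "q \<in> set xs" "P q" "sorted_wrt (\<lambda>p q. fst p < (fst q::nat)) xs"
  then obtain p where p: "find P xs = Some p"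
    by (metis find_None_iff not_Some_eq)
  obtain i where i: "i < length xs" "P (xs ! i)" "p = xs ! i" "\<forall>j<i. \<not> P (xs ! j)"
    using p unfolding find_Some_iff by blast
  obtain j where j: "j < length xs" "q = xs ! j" using a(1) by (metis in_set_conv_nth)
  have "i \<le> j" using i(4) j a(2) by (meson not_le)
  then have "fst (xs ! i) \<le> fst (xs ! j)" using a(3) j(1)
    by (metis le_eq_less_or_eq order.strict_implies_order sorted_wrt_nth_less)
  then show ?thesis using p i(3) j(2) by blast
qed

locale fc =
  fixes E :: "'a \<Rightarrow> 'a \<Rightarrow> bool" and v :: "nat \<Rightarrow> 'a"
  assumes symE: "\<And>x y. E x y \<Longrightarrow> E y x" and irr: "\<And>x. \<not> E x x"
begin

abbreviation Q where "Q n \<equiv> fst (run E v n)"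
abbreviation M where "M n \<equiv> snd (run E v n)"

lemma run_Suc: "run E v (Suc n) = (case find (\<lambda>p. E (snd p) (v (Suc n))) (Q n) of
        None \<Rightarrow> (Q n @ [(Suc n, v (Suc n))], M n)
      | Some p \<Rightarrow> (remove1 p (Q n), (fst p, Suc n) # M n))"
  by (simp add: case_prod_beta Let_def)

definition inv where "inv n \<longleftrightarrow>
   sorted_wrt (\<lambda>p q. fst p < fst q) (Q n) \<and>
   (\<forall>p\<in>set (Q n). snd p = v (fst p) \<and> 1 \<le> fst p \<and> fst p \<le> n) \<and>
   (\<forall>p\<in>set (M n). 1 \<le> fst p \<and> fst p < snd p \<and> snd p \<le> n) \<and>
   fst ` set (Q n) \<union> itemsM (M n) = {1..n} \<and>
   fst ` set (Q n) \<inter> itemsM (M n) = {} \<and>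
   (\<forall>p\<in>set (M n). \<forall>q\<in>set (M n). p \<noteq> q \<longrightarrow> fst p \<noteq> fst q \<and> fst p \<noteq> snd q \<and> snd p \<noteq> fst q \<and> snd p \<noteq> snd q) \<and>
   (\<forall>p\<in>set (Q n). \<forall>q\<in>set (Q n). \<not> E (snd p) (snd q))"

lemma inv_all: "inv n"
proof (induction n)
  case 0
  then show ?case by (simp add: inv_def itemsM_def)
next
  case (Suc n)
  note I = Suc[unfolded inv_def]
  note I1 = I[THEN conjunct1] and I2 = I[THEN conjunct2, THEN conjunct1]
   and I3 = I[THEN conjunct2, THEN conjunct2, THEN conjunct1]
   and I4 = I[THEN conjunct2, THEN conjunct2, THEN conjunct2, THEN conjunct1]
   and I5 = I[THEN conjunct2, THEN conjunct2, THEN conjunct2, THEN conjunct2, THEN conjunct1]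
   and I6 = I[THEN conjunct2, THEN conjunct2, THEN conjunct2, THEN conjunct2, THEN conjunct2, THEN conjunct1]
   and I7 = I[THEN conjunct2, THEN conjunct2, THEN conjunct2, THEN conjunct2, THEN conjunct2, THEN conjunct2]
  have dQ: "distinct (Q n)" using I1 sorted_fst_distinct' by blast
  show ?case
  proof (cases "find (\<lambda>p. E (snd p) (v (Suc n))) (Q n)")
    case None
    hence nb: "\<forall>x\<in>set (Q n). \<not> E (snd x) (v (Suc n))" by (auto simp add: find_None_iff)
    have r: "run E v (Suc n) = (Q n @ [(Suc n, v (Suc n))], M n)" unfolding run_Suc using None by simp
    show ?thesis unfolding inv_def r fst_conv snd_conv
    proof (intro conjI)
      show "sorted_wrt (\<lambda>p q. fst p < fst q) (Q n @ [(Suc n, v (Suc n))])"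
        using I by (auto simp: sorted_wrt_append)
      show "\<forall>p\<in>set (Q n @ [(Suc n, v (Suc n))]). snd p = v (fst p) \<and> 1 \<le> fst p \<and> fst p \<le> Suc n"
        using I by auto
      show "\<forall>p\<in>set (M n). 1 \<le> fst p \<and> fst p < snd p \<and> snd p \<le> Suc n"
        using I by auto
      show "fst ` set (Q n @ [(Suc n, v (Suc n))]) \<union> itemsM (M n) = {1..Suc n}"
        using I by auto
      show "fst ` set (Q n @ [(Suc n, v (Suc n))]) \<inter> itemsM (M n) = {}"
        using I by (auto simp: itemsM_def)
      show "\<forall>p\<in>set (M n). \<forall>q\<in>set (M n). p \<noteq> q \<longrightarrow> fst p \<noteq> fst q \<and> fst p \<noteq> snd q \<and> snd p \<noteq> fst q \<and> snd p \<noteq> snd q"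
        using I by blast
      show "\<forall>p\<in>set (Q n @ [(Suc n, v (Suc n))]). \<forall>q\<in>set (Q n @ [(Suc n, v (Suc n))]). \<not> E (snd p) (snd q)"
      proof (intro ballI)
        fix p q assume p: "p \<in> set (Q n @ [(Suc n, v (Suc n))])" and q: "q \<in> set (Q n @ [(Suc n, v (Suc n))])"
        have i7: "\<forall>p\<in>set (Q n). \<forall>q\<in>set (Q n). \<not> E (snd p) (snd q)" using I7 .
        from p q show "\<not> E (snd p) (snd q)"
          using i7 nb irr symE unfolding set_append by (auto simp del: )
      qed
    qed
  next
    case (Some p)
    have pin: "p \<in> set (Q n)" and Ep: "E (snd p) (v (Suc n))"
    proof -
      obtain i where "i < length (Q n)" "E (snd (Q n ! i)) (v (Suc n))" "p = Q n ! i"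
        using find_Some_iff[THEN iffD1, OF Some] by blast
      then show "p \<in> set (Q n)" "E (snd p) (v (Suc n))" by auto
    qed
    have r: "run E v (Suc n) = (remove1 p (Q n), (fst p, Suc n) # M n)" unfolding run_Suc using Some by simp
    have fstinj: "\<forall>q\<in>set (Q n). fst q = fst p \<longrightarrow> q = p"
      using sorted_fst_distinct[of "Q n"] I1 pin unfolding distinct_map inj_on_def by blast
    show ?thesis unfolding inv_def r fst_conv snd_conv
    proof (intro conjI)
      have i1: "sorted_wrt (\<lambda>p q. fst p < fst q) (Q n)" using I1 .
      show "sorted_wrt (\<lambda>p q. fst p < fst q) (remove1 p (Q n))"
        by (rule sorted_wrt_remove1[OF i1])
      have sr: "set (remove1 p (Q n)) = set (Q n) - {p}" using dQ by simp
      have i2: "\<forall>p\<in>set (Q n). snd p = v (fst p) \<and> 1 \<le> fst p \<and> fst p \<le> n" using I2 .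
      show "\<forall>p\<in>set (remove1 p (Q n)). snd p = v (fst p) \<and> 1 \<le> fst p \<and> fst p \<le> Suc n"
        using i2 sr by auto
      have i3: "\<forall>p\<in>set (M n). 1 \<le> fst p \<and> fst p < snd p \<and> snd p \<le> n" using I3 .
      have pb: "1 \<le> fst p \<and> fst p \<le> n" using i2 pin by blast
      show "\<forall>q\<in>set ((fst p, Suc n) # M n). 1 \<le> fst q \<and> fst q < snd q \<and> snd q \<le> Suc n"
        using i3 pb by auto
      have i4: "fst ` set (Q n) \<union> itemsM (M n) = {1..n}" using I4 .
      have i5: "fst ` set (Q n) \<inter> itemsM (M n) = {}" using I5 .
      have fr: "fst ` set (remove1 p (Q n)) = fst ` set (Q n) - {fst p}"
      proof
        show "fst ` set (remove1 p (Q n)) \<subseteq> fst ` set (Q n) - {fst p}"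
          unfolding sr using fstinj by fastforce
        show "fst ` set (Q n) - {fst p} \<subseteq> fst ` set (remove1 p (Q n))"
          using sr by blast
      qed
      have im: "itemsM ((fst p, Suc n) # M n) = itemsM (M n) \<union> {fst p, Suc n}"
        by (auto simp: itemsM_def)
      show "fst ` set (remove1 p (Q n)) \<union> itemsM ((fst p, Suc n) # M n) = {1..Suc n}"
      proof -
        have fq: "fst p \<in> fst ` set (Q n)" using pin by blast
        have "fst ` set (Q n) - {fst p} \<union> (itemsM (M n) \<union> {fst p, Suc n}) = (fst ` set (Q n) \<union> itemsM (M n)) \<union> {Suc n}"
          using fq by blast
        also have "\<dots> = {1..Suc n}" unfolding i4 by auto
        finally show ?thesis unfolding fr im .
      qed
      have sn0: "Suc n \<notin> {1..n}" by simp
      have sn: "Suc n \<notin> itemsM (M n)" using i4 sn0 by blast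
      have sq: "Suc n \<notin> fst ` set (Q n)" using i4 sn0 by blast
      show "fst ` set (remove1 p (Q n)) \<inter> itemsM ((fst p, Suc n) # M n) = {}"
        unfolding fr im using i5 sq by auto
      have i6: "\<forall>p\<in>set (M n). \<forall>q\<in>set (M n). p \<noteq> q \<longrightarrow> fst p \<noteq> fst q \<and> fst p \<noteq> snd q \<and> snd p \<noteq> fst q \<and> snd p \<noteq> snd q" using I6 .
      have fpn: "fst p \<notin> itemsM (M n)" using i5 pin by auto
      show "\<forall>pa\<in>set ((fst p, Suc n) # M n). \<forall>q\<in>set ((fst p, Suc n) # M n). pa \<noteq> q \<longrightarrow> fst pa \<noteq> fst q \<and> fst pa \<noteq> snd q \<and> snd pa \<noteq> fst q \<and> snd pa \<noteq> snd q"
      proof (intro ballI impI)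
        fix a b assume a: "a \<in> set ((fst p, Suc n) # M n)" and b: "b \<in> set ((fst p, Suc n) # M n)" and ab: "a \<noteq> b"
        have "fst q \<in> itemsM (M n) \<and> snd q \<in> itemsM (M n)" if "q \<in> set (M n)" for q
          using that unfolding itemsM_def by auto
        note that = this
        show "fst a \<noteq> fst b \<and> fst a \<noteq> snd b \<and> snd a \<noteq> fst b \<and> snd a \<noteq> snd b"
        proof -
          have ca: "a = (fst p, Suc n) \<or> a \<in> set (M n)" using a by simp
          have cb: "b = (fst p, Suc n) \<or> b \<in> set (M n)" using b by simp
          show ?thesis
          proof (cases "a \<in> set (M n)")
            case True
            note aM = this
            show ?thesis
            proof (cases "b \<in> set (M n)")
              case True
              then show ?thesis using aM ab i6 by blast
            next
              case False
              then have "b = (fst p, Suc n)" using cb by blast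
              then show ?thesis using that[OF aM] fpn sn by auto
            qed
          next
            case False
            then have an: "a = (fst p, Suc n)" using ca by blast
            then have bM: "b \<in> set (M n)" using cb ab by blast
            show ?thesis using an that[OF bM] fpn sn by auto
          qed
        qed
      qed
      have i7: "\<forall>p\<in>set (Q n). \<forall>q\<in>set (Q n). \<not> E (snd p) (snd q)" using I7 .
      show "\<forall>pa\<in>set (remove1 p (Q n)). \<forall>q\<in>set (remove1 p (Q n)). \<not> E (snd pa) (snd q)"
        using i7 sr by blast
    qed
  qed
qed

lemma sortedQ: "sorted_wrt (\<lambda>p q. fst p < fst q) (Q n)"
  using inv_all[of n] unfolding inv_def by blast
lemma Qv: "p \<in> set (Q n) \<Longrightarrow> snd p = v (fst p)"
  using inv_all[of n] unfolding inv_def by blast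
lemma Qb: "p \<in> set (Q n) \<Longrightarrow> 1 \<le> fst p \<and> fst p \<le> n"
  using inv_all[of n] unfolding inv_def by blast
lemma Mb: "p \<in> set (M n) \<Longrightarrow> 1 \<le> fst p \<and> fst p < snd p \<and> snd p \<le> n"
  using inv_all[of n] unfolding inv_def by blast
lemma cover: "fst ` set (Q n) \<union> itemsM (M n) = {1..n}"
  using inv_all[of n] unfolding inv_def by blast
lemma disj: "fst ` set (Q n) \<inter> itemsM (M n) = {}"
  using inv_all[of n] unfolding inv_def by blast
lemma Mdisj: "p \<in> set (M n) \<Longrightarrow> q \<in> set (M n) \<Longrightarrow> p \<noteq> q \<Longrightarrow> fst p \<noteq> fst q \<and> fst p \<noteq> snd q \<and> snd p \<noteq> fst q \<and> snd p \<noteq> snd q"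
proof -
  assume a: "p \<in> set (M n)" "q \<in> set (M n)" "p \<noteq> q"
  have "\<forall>p\<in>set (M n). \<forall>q\<in>set (M n). p \<noteq> q \<longrightarrow> fst p \<noteq> fst q \<and> fst p \<noteq> snd q \<and> snd p \<noteq> fst q \<and> snd p \<noteq> snd q"
    using inv_all[of n] unfolding inv_def by blast
  then show ?thesis using a by blast
qed
lemma indep: "p \<in> set (Q n) \<Longrightarrow> q \<in> set (Q n) \<Longrightarrow> \<not> E (snd p) (snd q)"
proof -
  assume a: "p \<in> set (Q n)" "q \<in> set (Q n)"
  have "\<forall>p\<in>set (Q n). \<forall>q\<in>set (Q n). \<not> E (snd p) (snd q)"
    using inv_all[of n] unfolding inv_def by blast
  then show ?thesis using a by blast
qed

lemma inQ: "t \<in> fst ` set (Q n) \<Longrightarrow> (t, v t) \<in> set (Q n)"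
  using Qv by force

lemma run_Suc_Some: "find (\<lambda>p. E (snd p) (v (Suc n))) (Q n) = Some p \<Longrightarrow>
   run E v (Suc n) = (remove1 p (Q n), (fst p, Suc n) # M n)"
  unfolding run_Suc by simp
lemma run_Suc_None: "find (\<lambda>p. E (snd p) (v (Suc n))) (Q n) = None \<Longrightarrow>
   run E v (Suc n) = (Q n @ [(Suc n, v (Suc n))], M n)"
  unfolding run_Suc by simp

lemma M_step: "set (M n) \<subseteq> set (M (Suc n))"
proof (cases "find (\<lambda>p. E (snd p) (v (Suc n))) (Q n)")
  case None then show ?thesis using run_Suc_None by simp
next
  case (Some p) then show ?thesis using run_Suc_Some by auto
qed

lemma M_mono: "n \<le> n' \<Longrightarrow> set (M n) \<subseteq> set (M n')"
proof (induction n' rule: dec_induct)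
  case base then show ?case by simp
next
  case (step m) then show ?case using M_step[of m] by blast
qed

lemma pair_at: "(k, l) \<in> set (M n) \<Longrightarrow>
   1 \<le> k \<and> k < l \<and> l \<le> n \<and> find (\<lambda>p. E (snd p) (v l)) (Q (l - 1)) = Some (k, v k) \<and> (k, l) \<in> set (M l)"
proof (induction n)
  case 0 then show ?case by simp
next
  case (Suc n)
  show ?case
  proof (cases "find (\<lambda>p. E (snd p) (v (Suc n))) (Q n)")
    case None then show ?thesis using run_Suc_None Suc by auto
  next
    case (Some p)
    have r: "run E v (Suc n) = (remove1 p (Q n), (fst p, Suc n) # M n)" using run_Suc_Some[OF Some] .
    show ?thesis
    proof (cases "(k, l) = (fst p, Suc n)")
      case True
      have pin: "p \<in> set (Q n)" using Some by (metis find_Some_iff nth_mem)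
      have "p = (fst p, v (fst p))" using Qv[OF pin] by (metis prod.collapse)
      then show ?thesis using True Some r Qb[OF pin] by auto
    next
      case False
      then have "(k, l) \<in> set (M n)" using Suc.prems r by auto
      then show ?thesis using Suc.IH by auto
    qed
  qed
qed

lemma pair_unique: "(k, l) \<in> set (M n) \<Longrightarrow> (k', l') \<in> set (M n') \<Longrightarrow>
  k = k' \<or> k = l' \<or> l = k' \<or> l = l' \<Longrightarrow> k = k' \<and> l = l'"
proof -
  assume a: "(k, l) \<in> set (M n)" "(k', l') \<in> set (M n')" "k = k' \<or> k = l' \<or> l = k' \<or> l = l'"
  let ?N = "max n n'"
  have "(k, l) \<in> set (M ?N)" using a(1) M_mono[of n ?N] by auto
  moreover have "(k', l') \<in> set (M ?N)" using a(2) M_mono[of n' ?N] by auto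
  ultimately show ?thesis using Mdisj[of "(k,l)" ?N "(k',l')"] a(3) by fastforce
qed

lemma items_iff: "t \<in> itemsM (M n) \<longleftrightarrow> (\<exists>l. matched_by E v n t l)"
  unfolding itemsM_def matched_by_def by force

lemma inQ_iff: "1 \<le> t \<Longrightarrow> t \<le> n \<Longrightarrow> t \<in> fst ` set (Q n) \<longleftrightarrow> t \<notin> itemsM (M n)"
  using cover[of n] disj[of n] by auto

lemma itemsM_mono: "n \<le> n' \<Longrightarrow> itemsM (M n) \<subseteq> itemsM (M n')"
  using M_mono unfolding itemsM_def by blast

lemma persist: "t \<in> fst ` set (Q n) \<Longrightarrow> t \<le> m \<Longrightarrow> m \<le> n \<Longrightarrow> t \<in> fst ` set (Q m)"
proof -
  assume a: "t \<in> fst ` set (Q n)" "t \<le> m" "m \<le> n"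
  have t1: "1 \<le> t" using a(1) Qb by force
  have "t \<notin> itemsM (M n)" using a(1) disj by blast
  then have "t \<notin> itemsM (M m)" using itemsM_mono[OF a(3)] by blast
  then show ?thesis using inQ_iff[OF t1 a(2)] by blast
qed

lemma matched_unique: "matched_by E v n t l \<Longrightarrow> matched_by E v n' t l' \<Longrightarrow> l = l'"
  unfolding matched_by_def
  by (metis pair_unique Mb prod.sel less_irrefl)

lemma ever_unique: "ever_matched E v t l \<Longrightarrow> ever_matched E v t l' \<Longrightarrow> l = l'"
  unfolding ever_matched_def using matched_unique by blast

lemma ever_sym: "ever_matched E v t l \<longleftrightarrow> ever_matched E v l t"
  unfolding ever_matched_def matched_by_def by blast

lemma ever_ordered: "ever_matched E v k l \<Longrightarrow> k < l \<Longrightarrow> (k, l) \<in> set (M l)"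
proof -
  assume a: "ever_matched E v k l" "k < l"
  then obtain N where "(k, l) \<in> set (M N) \<or> (l, k) \<in> set (M N)"
    unfolding ever_matched_def matched_by_def by blast
  then show ?thesis using pair_at a(2) by fastforce
qed

lemma step_set_None: "find (\<lambda>p. E (snd p) (v (Suc n))) (Q n) = None \<Longrightarrow>
   fst ` set (Q (Suc n)) = insert (Suc n) (fst ` set (Q n))"
  using run_Suc_None by simp

lemma step_set_Some: "find (\<lambda>p. E (snd p) (v (Suc n))) (Q n) = Some p \<Longrightarrow>
   fst ` set (Q (Suc n)) = fst ` set (Q n) - {fst p} \<and> (fst p, Suc n) \<in> set (M (Suc n))"
proof -
  assume a: "find (\<lambda>p. E (snd p) (v (Suc n))) (Q n) = Some p"
  have r: "run E v (Suc n) = (remove1 p (Q n), (fst p, Suc n) # M n)" using run_Suc_Some[OF a] .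
  have d: "distinct (map fst (Q n))" using sorted_fst_distinct[OF sortedQ] .
  have dQ: "distinct (Q n)" using d distinct_map by blast
  have pin: "p \<in> set (Q n)" using find_found[OF a] by blast
  have inj: "\<forall>q\<in>set (Q n). fst q = fst p \<longrightarrow> q = p" using d pin unfolding distinct_map inj_on_def by blast
  have "set (remove1 p (Q n)) = set (Q n) - {p}" using dQ by simp
  then have "fst ` set (remove1 p (Q n)) = fst ` set (Q n) - {fst p}" using inj pin by fastforce
  then show ?thesis using r by simp
qed

lemma find_none_set: "(\<forall>t\<in>fst ` set (Q n). \<not> E (v t) c) \<Longrightarrow> find (\<lambda>p. E (snd p) c) (Q n) = None"
proof -
  assume a: "\<forall>t\<in>fst ` set (Q n). \<not> E (v t) c"
  have "\<forall>p\<in>set (Q n). \<not> E (snd p) c"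
  proof
    fix p assume pin: "p \<in> set (Q n)"
    then have sp: "snd p = v (fst p)" using Qv by blast
    have "fst p \<in> fst ` set (Q n)" using pin by blast
    then have "\<not> E (v (fst p)) c" using a by blast
    then show "\<not> E (snd p) c" using sp by simp
  qed
  then show ?thesis by (auto simp add: find_None_iff)
qed

lemma find_some_set: "t \<in> fst ` set (Q n) \<Longrightarrow> E (v t) c \<Longrightarrow> (\<forall>t'\<in>fst ` set (Q n). t' < t \<longrightarrow> \<not> E (v t') c)
   \<Longrightarrow> find (\<lambda>p. E (snd p) c) (Q n) = Some (t, v t)"
proof -
  assume a: "t \<in> fst ` set (Q n)" "E (v t) c" "\<forall>t'\<in>fst ` set (Q n). t' < t \<longrightarrow> \<not> E (v t') c"
  have tq: "(t, v t) \<in> set (Q n)" using inQ[OF a(1)] .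
  have "\<exists>p. find (\<lambda>p. E (snd p) c) (Q n) = Some p \<and> fst p \<le> fst (t, v t)"
    using find_le[of "(t, v t)" "Q n" "\<lambda>p. E (snd p) c"] tq a(2) sortedQ by simp
  then obtain p where p: "find (\<lambda>p. E (snd p) c) (Q n) = Some p" "fst p \<le> t" by auto
  have pp: "p \<in> set (Q n)" "E (snd p) c" using find_found[OF p(1)] by auto
  have sp: "snd p = v (fst p)" using Qv[OF pp(1)] .
  have "\<not> fst p < t"
  proof
    assume "fst p < t"
    moreover have "fst p \<in> fst ` set (Q n)" using pp(1) by simp
    ultimately have "\<not> E (v (fst p)) c" using a(3) by blast
    then show False using pp(2) sp by simp
  qed
  then have "fst p = t" using p(2) by simp
  then have "p = (t, v t)" using sp by (metis prod.collapse)
  then show ?thesis using p(1) by simp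
qed

lemma step_none: "(\<forall>t\<in>fst ` set (Q n). \<not> E (v t) (v (Suc n))) \<Longrightarrow>
   fst ` set (Q (Suc n)) = insert (Suc n) (fst ` set (Q n))"
  by (rule step_set_None, rule find_none_set)

lemma step_some: "t \<in> fst ` set (Q n) \<Longrightarrow> E (v t) (v (Suc n)) \<Longrightarrow>
   (\<forall>t'\<in>fst ` set (Q n). t' < t \<longrightarrow> \<not> E (v t') (v (Suc n))) \<Longrightarrow>
   fst ` set (Q (Suc n)) = fst ` set (Q n) - {t} \<and> matched_by E v (Suc n) t (Suc n)"
proof -
  assume a: "t \<in> fst ` set (Q n)" "E (v t) (v (Suc n))" "\<forall>t'\<in>fst ` set (Q n). t' < t \<longrightarrow> \<not> E (v t') (v (Suc n))"
  have f: "find (\<lambda>p. E (snd p) (v (Suc n))) (Q n) = Some (t, v t)" using find_some_set[OF a] .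
  show ?thesis using step_set_Some[OF f] unfolding matched_by_def by simp
qed

lemma waiting: "(j, i2) \<in> set (M N) \<Longrightarrow> j \<le> n \<Longrightarrow> n < i2 \<Longrightarrow> j \<in> fst ` set (Q n)"
proof -
  assume a: "(j, i2) \<in> set (M N)" "j \<le> n" "n < i2"
  have j1: "1 \<le> j" using Mb[OF a(1)] by simp
  have "j \<notin> itemsM (M n)"
  proof
    assume "j \<in> itemsM (M n)"
    then obtain k l where kl: "(k, l) \<in> set (M n)" "j = k \<or> j = l" unfolding itemsM_def by force
    then have "k = j \<and> l = i2" using pair_unique[OF kl(1) a(1)] by blast
    then show False using Mb[OF kl(1)] a(3) by simp
  qed
  then show ?thesis using inQ_iff[OF j1 a(2)] by blast
qed


end


definition cnt :: "(nat \<Rightarrow> bool) \<Rightarrow> nat \<Rightarrow> nat" where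
  "cnt P s = card {i. i < s \<and> P i}"

lemma cnt_0[simp]: "cnt P 0 = 0" unfolding cnt_def by simp

lemma cnt_Suc: "cnt P (Suc s) = (if P s then Suc (cnt P s) else cnt P s)"
proof -
  have "{i. i < Suc s \<and> P i} = (if P s then insert s {i. i < s \<and> P i} else {i. i < s \<and> P i})"
    by (auto simp: less_Suc_eq)
  then show ?thesis unfolding cnt_def by simp
qed

lemma cnt_mono: "s \<le> s' \<Longrightarrow> cnt P s \<le> cnt P s'"
  unfolding cnt_def by (rule card_mono) auto

lemma cnt_strict: "s < s' \<Longrightarrow> P s \<Longrightarrow> cnt P s < cnt P s'"
proof -
  assume a: "s < s'" "P s"
  have "cnt P s < cnt P (Suc s)" using a(2) cnt_Suc[of P s] by simp
  also have "\<dots> \<le> cnt P s'" using a(1) cnt_mono by simp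
  finally show ?thesis .
qed

lemma cnt_le: "cnt P s \<le> s"
proof -
  have "cnt P s \<le> card {..<s}" unfolding cnt_def by (rule card_mono) auto
  then show ?thesis by simp
qed

lemma cnt_surj: "k < cnt P s \<Longrightarrow> \<exists>i<s. P i \<and> cnt P i = k"
proof (induction s)
  case 0 then show ?case by simp
next
  case (Suc s)
  show ?case
  proof (cases "k < cnt P s")
    case True
    then obtain i where "i < s" "P i" "cnt P i = k" using Suc.IH by blast
    then show ?thesis using less_SucI by blast
  next
    case False
    then have "P s \<and> cnt P s = k" using Suc.prems cnt_Suc[of P s] by (auto split: if_splits)
    then show ?thesis by blast
  qed
qed

lemma cnt_inj: "P i \<Longrightarrow> P j \<Longrightarrow> cnt P i = cnt P j \<Longrightarrow> i = j"
  by (metis cnt_strict less_irrefl nat_neq_iff)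

definition pos :: "(nat \<Rightarrow> bool) \<Rightarrow> nat \<Rightarrow> nat" where
  "pos P k = (THE i. P i \<and> cnt P i = k)"

lemma pos_spec: "k < cnt P s \<Longrightarrow> P (pos P k) \<and> cnt P (pos P k) = k \<and> pos P k < s"
proof -
  assume a: "k < cnt P s"
  obtain i where i: "i < s" "P i" "cnt P i = k" using cnt_surj[OF a] by blast
  have "pos P k = i" unfolding pos_def
    by (rule the_equality) (use i cnt_inj in blast)+
  then show ?thesis using i by simp
qed

lemma pos_cnt: "P i \<Longrightarrow> pos P (cnt P i) = i"
  unfolding pos_def by (rule the_equality) (use cnt_inj in blast)+

lemma cnt_less_iff: "P i \<Longrightarrow> P j \<Longrightarrow> cnt P i < cnt P j \<longleftrightarrow> i < j"
  by (metis cnt_strict less_irrefl nat_neq_iff order.asym)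



fun cls :: "'a letter \<Rightarrow> 'a" where "cls (Pl a) = a" | "cls (Ti a) = a"
fun isPl :: "'a letter \<Rightarrow> bool" where "isPl (Pl a) = True" | "isPl (Ti a) = False"

definition PB :: "'a set \<Rightarrow> ('a \<Rightarrow> 'a \<Rightarrow> bool) \<Rightarrow> 'a letter list \<Rightarrow> bool" where
  "PB V E w \<longleftrightarrow> w = [] \<or> (isPl (hd w) \<and> (\<forall>x\<in>set w. cls x \<in> V) \<and>
     (\<forall>i j. i < j \<longrightarrow> j < length w \<longrightarrow> isPl (w ! i) \<longrightarrow> \<not> E (cls (w ! i)) (cls (w ! j))))"

definition PF :: "'a set \<Rightarrow> ('a \<Rightarrow> 'a \<Rightarrow> bool) \<Rightarrow> 'a letter list \<Rightarrow> bool" where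
  "PF V E u \<longleftrightarrow> u = [] \<or> (\<not> isPl (last u) \<and> (\<forall>x\<in>set u. cls x \<in> V) \<and>
     (\<forall>i j. i < j \<longrightarrow> j < length u \<longrightarrow> \<not> isPl (u ! j) \<longrightarrow> \<not> E (cls (u ! i)) (cls (u ! j))))"

context fc begin

lemma F_nec:
  assumes V: "\<And>i. v i \<in> V" and Fd: "Fdefined E v m"
  shows "PF V E (Fstate E v m)"
proof (cases "Q m = []")
  case True
  then show ?thesis unfolding PF_def Fstate_def by simp
next
  case False
  define S where "S = {l. \<exists>k. 1 \<le> k \<and> k \<le> m \<and> ever_matched E v k l}"
  define j where "j = jidx E v m"
  have jS: "j = Max S" unfolding j_def jidx_def S_def ..
  have finS: "finite S"
  proof -
    have "S \<subseteq> (\<lambda>k. THE l. ever_matched E v k l) ` {1..m}"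
    proof
      fix l assume "l \<in> S"
      then obtain k where k: "1 \<le> k" "k \<le> m" "ever_matched E v k l" unfolding S_def by blast
      then have "l = (THE l. ever_matched E v k l)" using ever_unique by (metis theI)
      then show "l \<in> (\<lambda>k. THE l. ever_matched E v k l) ` {1..m}" using k by auto
    qed
    then show ?thesis by (rule finite_subset) simp
  qed
  obtain q where q: "q \<in> set (Q m)" using False by (cases "Q m") auto
  have q1: "1 \<le> fst q \<and> fst q \<le> m" using Qb[OF q] .
  obtain l0 where l0: "ever_matched E v (fst q) l0" using Fd q unfolding Fdefined_def by blast
  have "l0 > m"
  proof (rule ccontr)
    assume "\<not> m < l0"
    then have lm: "l0 \<le> m" by simp
    obtain N where "(fst q, l0) \<in> set (M N) \<or> (l0, fst q) \<in> set (M N)"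
      using l0 unfolding ever_matched_def matched_by_def by blast
    then have "(fst q, l0) \<in> set (M m) \<or> (l0, fst q) \<in> set (M m)"
    proof
      assume "(fst q, l0) \<in> set (M N)"
      then have "(fst q, l0) \<in> set (M l0)" "l0 \<le> m" using pair_at lm by auto
      then show ?thesis using M_mono[of l0 m] by auto
    next
      assume "(l0, fst q) \<in> set (M N)"
      then have "(l0, fst q) \<in> set (M (fst q))" using pair_at by auto
      then show ?thesis using M_mono[of "fst q" m] q1 by auto
    qed
    then have "fst q \<in> itemsM (M m)" unfolding itemsM_def by force
    then show False using disj[of m] q by blast
  qed
  have l0S: "l0 \<in> S" unfolding S_def using q1 l0 by blast
  have jm: "j > m" using Max_ge[OF finS l0S] \<open>l0 > m\<close> jS by simp
  have jS': "j \<in> S" using jS finS l0S Max_in by blast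
  define g where "g = (\<lambda>t. if \<exists>k. 1 \<le> k \<and> k \<le> m \<and> ever_matched E v k t
                     then Ti (v (THE k. 1 \<le> k \<and> k \<le> m \<and> ever_matched E v k t)) else Pl (v t))"
  have FS: "Fstate E v m = map g [Suc m ..< Suc j]" unfolding Fstate_def g_def j_def using False by simp
  have theK: "(THE k. 1 \<le> k \<and> k \<le> m \<and> ever_matched E v k t) = k"
    if "1 \<le> k" "k \<le> m" "ever_matched E v k t" for k t
  proof (rule the_equality)
    show "1 \<le> k \<and> k \<le> m \<and> ever_matched E v k t" using that by blast
    fix k' assume "1 \<le> k' \<and> k' \<le> m \<and> ever_matched E v k' t"
    then show "k' = k" using that ever_unique ever_sym by blast
  qed
  have gTi: "g t = Ti (v k)" if "1 \<le> k" "k \<le> m" "ever_matched E v k t" for k t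
    unfolding g_def using that theK[OF that] by auto
  have gPl: "g t = Pl (v t)" if "\<not> (\<exists>k. 1 \<le> k \<and> k \<le> m \<and> ever_matched E v k t)" for t
    unfolding g_def using that by auto
  let ?u = "map g [Suc m ..< Suc j]"
  have len: "length ?u = j - m" using jm by simp
  have nth: "?u ! i = g (Suc m + i)" if "i < j - m" for i using that by (subst nth_map_upt) auto
  have last: "\<not> isPl (last ?u)"
  proof -
    have "last ?u = g j" using jm by (simp add: last_map)
    moreover obtain k where "1 \<le> k" "k \<le> m" "ever_matched E v k j" using jS' unfolding S_def by blast
    ultimately show ?thesis using gTi by simp
  qed
  have clsV: "\<forall>x\<in>set ?u. cls x \<in> V"
  proof
    fix x assume "x \<in> set ?u"
    then obtain t where "x = g t" by auto
    then show "cls x \<in> V" unfolding g_def using V by auto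
  qed
  have pw: "\<not> E (cls (?u ! i)) (cls (?u ! i'))" if ii: "i < i'" "i' < length ?u" "\<not> isPl (?u ! i')" for i i'
  proof -
    define s where "s = Suc m + i"
    define t where "t = Suc m + i'"
    have st: "m < s" "s < t" unfolding s_def t_def using ii by auto
    have "\<exists>k. 1 \<le> k \<and> k \<le> m \<and> ever_matched E v k t"
    proof (rule ccontr)
      assume "\<not> ?thesis"
      then have "g t = Pl (v t)" using gPl by blast
      then show False using ii nth[of i'] len unfolding t_def by auto
    qed
    then obtain k where k: "1 \<le> k" "k \<le> m" "ever_matched E v k t" by blast
    have ui': "?u ! i' = Ti (v k)" using nth[of i'] ii len gTi[OF k] unfolding t_def by auto
    have kt: "(k, t) \<in> set (M t)" using ever_ordered[OF k(3)] k st by simp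
    have fk: "find (\<lambda>p. E (snd p) (v t)) (Q (t - 1)) = Some (k, v k)" using pair_at[OF kt] by blast
    have kQt: "(k, v k) \<in> set (Q (t - 1))" using find_found[OF fk] by blast
    have kQs: "k \<in> fst ` set (Q (s - 1))"
      using persist[of k "t - 1" "s - 1"] kQt st k by force
    then have kQs': "(k, v k) \<in> set (Q (s - 1))" using inQ by blast
    have ui: "?u ! i = g s" using nth[of i] ii len unfolding s_def by auto
    show ?thesis
    proof (cases "\<exists>k'. 1 \<le> k' \<and> k' \<le> m \<and> ever_matched E v k' s")
      case True
      then obtain k' where k': "1 \<le> k'" "k' \<le> m" "ever_matched E v k' s" by blast
      have gs: "g s = Ti (v k')" using gTi[OF k'] .
      have ks: "(k', s) \<in> set (M s)" using ever_ordered[OF k'(3)] k' st by simp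
      have fk': "find (\<lambda>p. E (snd p) (v s)) (Q (s - 1)) = Some (k', v k')" using pair_at[OF ks] by blast
      have k'Q: "(k', v k') \<in> set (Q (s - 1))" using find_found[OF fk'] by blast
      have "k \<noteq> k'"
      proof
        assume "k = k'"
        then have "s = t" using k(3) k'(3) ever_unique by blast
        then show False using st by simp
      qed
      then have "\<not> E (snd (k', v k')) (snd (k, v k))" using indep[OF k'Q kQs'] by blast
      then show ?thesis using ui ui' gs by simp
    next
      case False
      have gs: "g s = Pl (v s)" using gPl[OF False] .
      show ?thesis
      proof
        assume "E (cls (?u ! i)) (cls (?u ! i'))"
        then have Ev: "E (v s) (v k)" using ui ui' gs by simp
        then have "E (snd (k, v k)) (v s)" using symE by simp
        then have "\<exists>p. find (\<lambda>p. E (snd p) (v s)) (Q (s - 1)) = Some p \<and> fst p \<le> fst (k, v k)"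
          using find_le[of "(k, v k)" "Q (s - 1)" "\<lambda>p. E (snd p) (v s)"] kQs' sortedQ by blast
        then obtain p where p: "find (\<lambda>p. E (snd p) (v s)) (Q (s - 1)) = Some p" "fst p \<le> k"
          by auto
        obtain s' where sS: "s = Suc s'" using st by (cases s) auto
        have "run E v (Suc s') = (remove1 p (Q s'), (fst p, Suc s') # M s')"
          using run_Suc_Some[of s' p] p(1) unfolding sS by simp
        then have "run E v s = (remove1 p (Q (s - 1)), (fst p, s) # M (s - 1))" using sS by simp
        then have "matched_by E v s (fst p) s" unfolding matched_by_def by simp
        then have em: "ever_matched E v (fst p) s" unfolding ever_matched_def by blast
        have "1 \<le> fst p" using Qb find_found[OF p(1)] by blast
        then show False using False em p(2) k(2) by auto
      qed
    qed
  qed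
  show ?thesis unfolding PF_def FS using last clsV pw by blast
qed


lemma B_nec:
  assumes V: "\<And>i. v i \<in> V"
  shows "PB V E (Bstate E v n)"
proof (cases "Q n = []")
  case True
  then show ?thesis unfolding PB_def Bstate_def by simp
next
  case False
  define i0 where "i0 = fst (hd (Q n))"
  have hdQ: "hd (Q n) \<in> set (Q n)" using False by simp
  have i0b: "1 \<le> i0 \<and> i0 \<le> n" using Qb[OF hdQ] unfolding i0_def .
  define f where "f = (\<lambda>t. if \<exists>l. matched_by E v n t l
                     then Ti (v (THE l. matched_by E v n t l)) else Pl (v t))"
  have BS: "Bstate E v n = map f [i0 ..< Suc n]" unfolding Bstate_def f_def i0_def using False by simp
  have theL: "(THE l. matched_by E v n t l) = l" if "matched_by E v n t l" for t l
    using that matched_unique by blast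
  have fTi: "f t = Ti (v l)" if "matched_by E v n t l" for t l
    unfolding f_def using that theL[OF that] by auto
  have fPl: "f t = Pl (v t)" if "\<not> (\<exists>l. matched_by E v n t l)" for t
    unfolding f_def using that by auto
  let ?w = "map f [i0 ..< Suc n]"
  have len: "length ?w = Suc n - i0" by (simp del: upt_Suc)
  have nth: "?w ! i = f (i0 + i)" if "i < Suc n - i0" for i using that by (subst nth_map_upt) auto
  have unm_Q: "t \<in> fst ` set (Q n)" if "\<not> (\<exists>l. matched_by E v n t l)" "1 \<le> t" "t \<le> n" for t
    using inQ_iff[OF that(2,3)] items_iff that(1) by blast
  have Q_unm: "\<not> (\<exists>l. matched_by E v n t l)" if "t \<in> fst ` set (Q n)" for t
    using disj[of n] items_iff that by blast
  have hd: "isPl (hd ?w)"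
  proof -
    have "hd ?w = f i0" using i0b by (simp add: hd_map upt_conv_Cons del: upt_Suc)
    moreover have "i0 \<in> fst ` set (Q n)" using hdQ unfolding i0_def by blast
    ultimately show ?thesis using Q_unm fPl by simp
  qed
  have clsV: "\<forall>x\<in>set ?w. cls x \<in> V"
  proof
    fix x assume "x \<in> set ?w"
    then obtain t where "x = f t" by auto
    then show "cls x \<in> V" unfolding f_def using V by auto
  qed
  have pw: "\<not> E (cls (?w ! i)) (cls (?w ! i'))" if ii: "i < i'" "i' < length ?w" "isPl (?w ! i)" for i i'
  proof -
    define s where "s = i0 + i"
    define t where "t = i0 + i'"
    have st: "i0 \<le> s" "s < t" "t \<le> n" unfolding s_def t_def using ii len by auto
    have ws: "?w ! i = f s" using nth[of i] ii len unfolding s_def by auto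
    have wt: "?w ! i' = f t" using nth[of i'] ii len unfolding t_def by auto
    have sunm: "\<not> (\<exists>l. matched_by E v n s l)"
    proof
      assume "\<exists>l. matched_by E v n s l"
      then obtain l where "matched_by E v n s l" by blast
      then have "f s = Ti (v l)" by (rule fTi)
      then show False using ii(3) ws by simp
    qed
    have fs: "f s = Pl (v s)" using fPl[OF sunm] .
    have sQ: "s \<in> fst ` set (Q n)" using unm_Q[OF sunm] st i0b by simp
    have sQ': "(s, v s) \<in> set (Q n)" using inQ[OF sQ] .
    show ?thesis
    proof (cases "\<exists>l. matched_by E v n t l")
      case False
      have tQ: "(t, v t) \<in> set (Q n)" using inQ[OF unm_Q[OF False]] st i0b by simp
      show ?thesis using indep[OF sQ' tQ] ws wt fs fPl[OF False] by simp
    next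
      case True
      then obtain l where l: "matched_by E v n t l" by blast
      have ft: "f t = Ti (v l)" using fTi[OF l] .
      from l have "(t, l) \<in> set (M n) \<or> (l, t) \<in> set (M n)" unfolding matched_by_def .
      then show ?thesis
      proof
        assume tl: "(t, l) \<in> set (M n)"
        have pa: "t < l" "l \<le> n" "find (\<lambda>p. E (snd p) (v l)) (Q (l - 1)) = Some (t, v t)"
          using pair_at[OF tl] by auto
        have "s \<in> fst ` set (Q (l - 1))" using persist[OF sQ, of "l - 1"] st pa by simp
        then have sQl: "(s, v s) \<in> set (Q (l - 1))" using inQ by blast
        have "\<not> E (snd (s, v s)) (v l)" using find_before[of E "v l" "Q (l - 1)", OF pa(3) sortedQ sQl] st by simp
        then show ?thesis using ws wt fs ft by simp
      next
        assume lt: "(l, t) \<in> set (M n)"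
        have pa: "l < t" "find (\<lambda>p. E (snd p) (v t)) (Q (t - 1)) = Some (l, v l)"
          using pair_at[OF lt] by auto
        have lQ: "(l, v l) \<in> set (Q (t - 1))" using find_found[OF pa(2)] by blast
        have "s \<in> fst ` set (Q (t - 1))" using persist[OF sQ, of "t - 1"] st by simp
        then have sQt: "(s, v s) \<in> set (Q (t - 1))" using inQ by blast
        show ?thesis using indep[OF sQt lQ] ws wt fs ft by simp
      qed
    qed
  qed
  show ?thesis unfolding PB_def BS using hd clsV pw by blast
qed

end


lemma letter_Pl: "isPl x \<Longrightarrow> x = Pl (cls x)" by (cases x) auto
lemma letter_Ti: "\<not> isPl x \<Longrightarrow> x = Ti (cls x)" by (cases x) auto

lemma F_suff:
  fixes V :: "'a set" and E :: "'a \<Rightarrow> 'a \<Rightarrow> bool"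
  assumes symE: "\<And>x y. E x y \<Longrightarrow> E y x" and irr: "\<And>x. \<not> E x x"
    and nbr: "\<And>b. b \<in> V \<Longrightarrow> \<exists>c\<in>V. E b c" and Vne: "V \<noteq> {}"
    and PFu: "PF V E u"
  shows "\<exists>v m. (\<forall>i. v i \<in> V) \<and> Fdefined E v m \<and> Fstate E v m = u"
proof (cases "u = []")
  case True
  obtain x where x: "x \<in> V" using Vne by blast
  show ?thesis
    by (rule exI[of _ "\<lambda>_. x"], rule exI[of _ 0]) (simp add: x True Fdefined_def Fstate_def)
next
  case False
  define L where "L = length u"
  define P where "P = (\<lambda>i. i < L \<and> \<not> isPl (u ! i))"
  define r where "r = cnt P L"
  define nb where "nb = (\<lambda>b. SOME c. c \<in> V \<and> E b c)"
  define x0 where "x0 = cls (u ! 0)"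
  define v where "v = (\<lambda>t. if 1 \<le> t \<and> t \<le> r then cls (u ! pos P (t - 1))
      else if r < t \<and> t \<le> r + L then (if isPl (u ! (t - r - 1)) then cls (u ! (t - r - 1)) else nb (cls (u ! (t - r - 1))))
      else x0)"
  interpret fc E v by unfold_locales (use symE irr in blast)+
  have L0: "0 < L" using False unfolding L_def by simp
  have lastTi: "\<not> isPl (u ! (L - 1))" using PFu False unfolding PF_def L_def by (simp add: last_conv_nth)
  have clsV: "\<And>i. i < L \<Longrightarrow> cls (u ! i) \<in> V" using PFu False unfolding PF_def L_def by auto
  have pw: "\<And>i j. i < j \<Longrightarrow> j < L \<Longrightarrow> \<not> isPl (u ! j) \<Longrightarrow> \<not> E (cls (u ! i)) (cls (u ! j))"
    using PFu False unfolding PF_def L_def by blast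
  have nbp: "nb b \<in> V \<and> E b (nb b)" if "b \<in> V" for b
  proof -
    have "\<exists>c. c \<in> V \<and> E b c" using nbr[OF that] by blast
    then show ?thesis unfolding nb_def by (rule someI_ex)
  qed
  have posP: "P (pos P k) \<and> cnt P (pos P k) = k \<and> pos P k < L" if "k < r" for k
    using pos_spec[of k P L] that unfolding r_def by blast
  have vV: "\<forall>t. v t \<in> V"
  proof
    fix t
    show "v t \<in> V"
    proof (cases "1 \<le> t \<and> t \<le> r")
      case True
      then have "t - 1 < r" by linarith
      then show ?thesis using True posP clsV unfolding v_def by simp
    next
      case f1: False
      show ?thesis
      proof (cases "r < t \<and> t \<le> r + L")
        case True
        then have "t - r - 1 < L" by linarith
        then show ?thesis using True f1 clsV nbp unfolding v_def by simp
      next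
        case False
        then have "v t = x0" using f1 unfolding v_def by auto
        then show ?thesis using clsV[OF L0] unfolding x0_def by simp
      qed
    qed
  qed
  have vpast: "v t = cls (u ! pos P (t - 1))" if "1 \<le> t" "t \<le> r" for t
    using that unfolding v_def by simp
  have vfut: "v (Suc (r + s)) = (if isPl (u ! s) then cls (u ! s) else nb (cls (u ! s)))" if "s < L" for s
    using that unfolding v_def by simp
  have posless: "pos P a < pos P b" if "a < b" "b < r" for a b
  proof -
    have "P (pos P a)" "P (pos P b)" "cnt P (pos P a) = a" "cnt P (pos P b) = b" using posP that by auto
    then show ?thesis using cnt_less_iff that(1) by metis
  qed
  have phase1: "fst ` set (Q t) = {1..t}" if "t \<le> r" for t
    using that
  proof (induction t)
    case 0 then show ?case by simp
  next
    case (Suc t)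
    have "\<forall>x\<in>fst ` set (Q t). \<not> E (v x) (v (Suc t))"
    proof
      fix x assume "x \<in> fst ` set (Q t)"
      then have x: "1 \<le> x" "x \<le> t" using Suc by auto
      have "v x = cls (u ! pos P (x - 1))" using vpast x Suc.prems by simp
      moreover have "v (Suc t) = cls (u ! pos P t)" using vpast Suc.prems by simp
      moreover have "pos P (x - 1) < pos P t" using posless x Suc.prems by simp
      moreover have "\<not> isPl (u ! pos P t)" "pos P t < L" using posP[of t] Suc.prems unfolding P_def by auto
      ultimately show "\<not> E (v x) (v (Suc t))" using pw by simp
    qed
    then have "fst ` set (Q (Suc t)) = insert (Suc t) (fst ` set (Q t))" by (rule step_none)
    then show ?case using Suc by auto
  qed
  have phase2: "fst ` set (Q (r + s)) \<inter> {1..r} = {x. cnt P s < x \<and> x \<le> r} \<and>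
     (\<forall>s'<s. P s' \<longrightarrow> ever_matched E v (Suc (cnt P s')) (Suc (r + s')))" if "s \<le> L" for s
    using that
  proof (induction s)
    case 0 then show ?case using phase1[of r] by auto
  next
    case (Suc s)
    have sL: "s < L" using Suc.prems by simp
    have IH1: "fst ` set (Q (r + s)) \<inter> {1..r} = {x. cnt P s < x \<and> x \<le> r}" using Suc by auto
    have IH2: "\<forall>s'<s. P s' \<longrightarrow> ever_matched E v (Suc (cnt P s')) (Suc (r + s'))" using Suc by auto
    have rs: "Suc (r + s) = r + Suc s" by simp
    show ?case
    proof (cases "P s")
      case True
      define x where "x = Suc (cnt P s)"
      have cr: "cnt P s < r" unfolding r_def using cnt_strict[of s L P, OF sL True] .
      have xQ: "x \<in> fst ` set (Q (r + s))" using IH1 cr unfolding x_def by auto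
      have vx: "v x = cls (u ! s)" using vpast[of x] cr pos_cnt[of P s, OF True] unfolding x_def by simp
      have ns: "\<not> isPl (u ! s)" using True unfolding P_def by simp
      have vn: "v (Suc (r + s)) = nb (cls (u ! s))" using vfut[OF sL] ns by simp
      have E1: "E (v x) (v (Suc (r + s)))" using vx vn nbp clsV[OF sL] by simp
      have mn: "\<forall>t'\<in>fst ` set (Q (r + s)). t' < x \<longrightarrow> \<not> E (v t') (v (Suc (r + s)))"
      proof (intro ballI impI)
        fix t' assume t': "t' \<in> fst ` set (Q (r + s))" "t' < x"
        have "1 \<le> t'" using t'(1) Qb by force
        moreover have "t' \<le> r" using t'(2) cr unfolding x_def by simp
        ultimately have "t' \<in> fst ` set (Q (r + s)) \<inter> {1..r}" using t'(1) by simp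
        then have "cnt P s < t'" using IH1 by blast
        then show "\<not> E (v t') (v (Suc (r + s)))" using t'(2) unfolding x_def by simp
      qed
      have st: "fst ` set (Q (Suc (r + s))) = fst ` set (Q (r + s)) - {x} \<and> matched_by E v (Suc (r + s)) x (Suc (r + s))"
        using step_some[OF xQ E1 mn] .
      have c1: "cnt P (Suc s) = Suc (cnt P s)" using cnt_Suc[of P s] True by simp
      have A: "fst ` set (Q (r + Suc s)) \<inter> {1..r} = {x. cnt P (Suc s) < x \<and> x \<le> r}"
      proof -
        have "fst ` set (Q (r + Suc s)) = fst ` set (Q (r + s)) - {x}" using st by simp
        then have "fst ` set (Q (r + Suc s)) \<inter> {1..r} = (fst ` set (Q (r + s)) \<inter> {1..r}) - {x}" by blast
        also have "\<dots> = {y. cnt P s < y \<and> y \<le> r} - {Suc (cnt P s)}" using IH1 unfolding x_def by simp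
        also have "\<dots> = {y. cnt P (Suc s) < y \<and> y \<le> r}" using c1 by auto
        finally show ?thesis .
      qed
      have em: "ever_matched E v (Suc (cnt P s)) (Suc (r + s))" using st unfolding ever_matched_def x_def by blast
      have B: "\<forall>s'<Suc s. P s' \<longrightarrow> ever_matched E v (Suc (cnt P s')) (Suc (r + s'))"
        using IH2 em less_Suc_eq by auto
      show ?thesis using A B by blast
    next
      case False
      have isp: "isPl (u ! s)" using False sL unfolding P_def by simp
      have vn: "v (Suc (r + s)) = cls (u ! s)" using vfut[OF sL] isp by simp
      have c1: "cnt P (Suc s) = cnt P s" using cnt_Suc[of P s] False by simp
      have noE: "\<not> E (v t) (v (Suc (r + s)))" if "t \<in> fst ` set (Q (r + s))" "t \<le> r" for t
      proof
        assume Et: "E (v t) (v (Suc (r + s)))"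
        have "1 \<le> t" using that(1) Qb by force
        then have "t \<in> fst ` set (Q (r + s)) \<inter> {1..r}" using that by simp
        then have tI: "cnt P s < t" using IH1 by blast
        define k where "k = t - 1"
        have kr: "k < r" "cnt P s \<le> k" using tI that(2) \<open>1 \<le> t\<close> unfolding k_def by auto
        have q: "P (pos P k)" "cnt P (pos P k) = k" "pos P k < L" using posP[OF kr(1)] by auto
        have vt: "v t = cls (u ! pos P k)" using vpast[of t] \<open>1 \<le> t\<close> that(2) unfolding k_def by simp
        have "s \<noteq> pos P k" using q(1) False by auto
        moreover have "\<not> pos P k < s" using cnt_strict[of "pos P k" s P] q kr by auto
        ultimately have sq: "s < pos P k" by simp
        have "\<not> E (cls (u ! s)) (cls (u ! pos P k))" using pw[OF sq q(3)] q(1) unfolding P_def by simp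
        moreover have "E (cls (u ! pos P k)) (cls (u ! s))" using Et vt vn by simp
        then have "E (cls (u ! s)) (cls (u ! pos P k))" by (rule symE)
        ultimately show False by contradiction
      qed
      have A: "fst ` set (Q (r + Suc s)) \<inter> {1..r} = {x. cnt P (Suc s) < x \<and> x \<le> r}"
      proof (cases "find (\<lambda>p. E (snd p) (v (Suc (r + s)))) (Q (r + s))")
        case None
        then have "fst ` set (Q (Suc (r + s))) = insert (Suc (r + s)) (fst ` set (Q (r + s)))"
          by (rule step_set_None)
        then have "fst ` set (Q (r + Suc s)) = insert (Suc (r + s)) (fst ` set (Q (r + s)))" by simp
        then have "fst ` set (Q (r + Suc s)) \<inter> {1..r} = fst ` set (Q (r + s)) \<inter> {1..r}"
          by (simp add: Int_insert_left)
        then show ?thesis using IH1 c1 by simp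
      next
        case (Some p)
        have st: "fst ` set (Q (Suc (r + s))) = fst ` set (Q (r + s)) - {fst p}"
          using step_set_Some[OF Some] by blast
        have pp: "p \<in> set (Q (r + s))" "E (snd p) (v (Suc (r + s)))" using find_found[OF Some] by auto
        have "snd p = v (fst p)" using Qv[OF pp(1)] .
        then have "\<not> fst p \<le> r" using noE[of "fst p"] pp by force
        have eq: "fst ` set (Q (r + Suc s)) = fst ` set (Q (r + s)) - {fst p}" using st by simp
        have nr: "fst p \<notin> {1..r}" using \<open>\<not> fst p \<le> r\<close> by simp
        have "fst ` set (Q (r + Suc s)) \<inter> {1..r} = (fst ` set (Q (r + s)) - {fst p}) \<inter> {1..r}" unfolding eq ..
        also have "\<dots> = fst ` set (Q (r + s)) \<inter> {1..r}" using nr by blast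
        finally have "fst ` set (Q (r + Suc s)) \<inter> {1..r} = fst ` set (Q (r + s)) \<inter> {1..r}" .
        then show ?thesis using IH1 c1 by simp
      qed
      have B: "\<forall>s'<Suc s. P s' \<longrightarrow> ever_matched E v (Suc (cnt P s')) (Suc (r + s'))"
        using IH2 False less_Suc_eq by auto
      show ?thesis using A B by blast
    qed
  qed
  have EM: "ever_matched E v (Suc (cnt P s)) (Suc (r + s))" if "P s" for s
  proof -
    have "s < L" using that unfolding P_def by simp
    then show ?thesis using phase2[of L] that by auto
  qed
  have PL1: "P (L - 1)" using L0 lastTi unfolding P_def by simp
  have r1: "1 \<le> r" using cnt_strict[of "L - 1" L P] PL1 L0 unfolding r_def by simp
  have Qr: "fst ` set (Q r) = {1..r}" using phase1 by simp
  have Qne: "Q r \<noteq> []" using Qr r1 by auto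
  have Fd: "Fdefined E v r"
    unfolding Fdefined_def
  proof
    fix p assume "p \<in> set (Q r)"
    then have "fst p \<in> {1..r}" using Qr by blast
    then have k: "fst p - 1 < r" "fst p = Suc (fst p - 1)" by auto
    have "P (pos P (fst p - 1))" "cnt P (pos P (fst p - 1)) = fst p - 1" using posP[OF k(1)] by auto
    then show "\<exists>l. ever_matched E v (fst p) l" using EM k(2) by metis
  qed
  have uniqk: "l = Suc (r + pos P (k - 1))" if "1 \<le> k" "k \<le> r" "ever_matched E v k l" for k l
  proof -
    have "k - 1 < r" using that by simp
    then have pk: "P (pos P (k - 1))" "cnt P (pos P (k - 1)) = k - 1" using posP by auto
    have "ever_matched E v (Suc (k - 1)) (Suc (r + pos P (k - 1)))" using EM[OF pk(1)] pk(2) by simp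
    moreover have "Suc (k - 1) = k" using that(1) by simp
    ultimately have "ever_matched E v k (Suc (r + pos P (k - 1)))" by simp
    from ever_unique[OF this that(3)] show ?thesis by simp
  qed
  define S where "S = {l. \<exists>k. 1 \<le> k \<and> k \<le> r \<and> ever_matched E v k l}"
  have jid: "jidx E v r = r + L"
  proof -
    have "jidx E v r = Max S" unfolding jidx_def S_def ..
    also have "\<dots> = r + L"
    proof (rule Max_eqI)
      show "finite S"
      proof (rule finite_subset)
        show "S \<subseteq> {..r + L}"
        proof
          fix l assume "l \<in> S"
          then obtain k where k: "1 \<le> k" "k \<le> r" "ever_matched E v k l" unfolding S_def by blast
          have "pos P (k - 1) < L" using posP[of "k - 1"] k by simp
          then show "l \<in> {..r + L}" using uniqk[OF k] by simp
        qed
      qed simp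
      show "l \<le> r + L" if "l \<in> S" for l
      proof -
        obtain k where k: "1 \<le> k" "k \<le> r" "ever_matched E v k l" using \<open>l \<in> S\<close> unfolding S_def by blast
        have "pos P (k - 1) < L" using posP[of "k - 1"] k by simp
        then show ?thesis using uniqk[OF k] by simp
      qed
      have "cnt P (L - 1) < r" using cnt_strict[of "L - 1" L P] PL1 L0 unfolding r_def by simp
      moreover have "Suc (r + (L - 1)) = r + L" using L0 by simp
      moreover have "ever_matched E v (Suc (cnt P (L - 1))) (Suc (r + (L - 1)))" using EM[OF PL1] .
      ultimately have "1 \<le> Suc (cnt P (L - 1)) \<and> Suc (cnt P (L - 1)) \<le> r \<and> ever_matched E v (Suc (cnt P (L - 1))) (r + L)"
        by simp
      then show "r + L \<in> S" unfolding S_def by blast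
    qed
    finally show ?thesis .
  qed
  define g where "g = (\<lambda>t. if \<exists>k. 1 \<le> k \<and> k \<le> r \<and> ever_matched E v k t
                     then Ti (v (THE k. 1 \<le> k \<and> k \<le> r \<and> ever_matched E v k t)) else Pl (v t))"
  have FS: "Fstate E v r = map g [Suc r ..< Suc (r + L)]" unfolding Fstate_def g_def jid using Qne by simp
  have gi: "g (Suc r + i) = u ! i" if "i < L" for i
  proof (cases "P i")
    case True
    have cr: "cnt P i < r" unfolding r_def using cnt_strict[of i L P, OF that True] .
    have em: "ever_matched E v (Suc (cnt P i)) (Suc r + i)" using EM[OF True] by simp
    have th: "(THE k. 1 \<le> k \<and> k \<le> r \<and> ever_matched E v k (Suc r + i)) = Suc (cnt P i)"
    proof (rule the_equality)
      show "1 \<le> Suc (cnt P i) \<and> Suc (cnt P i) \<le> r \<and> ever_matched E v (Suc (cnt P i)) (Suc r + i)"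
        using em cr by simp
      fix k assume "1 \<le> k \<and> k \<le> r \<and> ever_matched E v k (Suc r + i)"
      then have "ever_matched E v (Suc r + i) k" using ever_sym by blast
      moreover have "ever_matched E v (Suc r + i) (Suc (cnt P i))" using em ever_sym by blast
      ultimately show "k = Suc (cnt P i)" by (rule ever_unique)
    qed
    have ex: "\<exists>k. 1 \<le> k \<and> k \<le> r \<and> ever_matched E v k (Suc r + i)" using em cr
      by (intro exI[of _ "Suc (cnt P i)"]) simp
    have "g (Suc r + i) = Ti (v (Suc (cnt P i)))" unfolding g_def using th ex by simp
    also have "\<dots> = Ti (cls (u ! i))" using vpast[of "Suc (cnt P i)"] cr pos_cnt[of P i, OF True] by simp
    also have "\<dots> = u ! i" using letter_Ti True unfolding P_def by metis
    finally show ?thesis .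
  next
    case False
    have isp: "isPl (u ! i)" using False that unfolding P_def by simp
    have ne: "\<not> (\<exists>k. 1 \<le> k \<and> k \<le> r \<and> ever_matched E v k (Suc r + i))"
    proof
      assume "\<exists>k. 1 \<le> k \<and> k \<le> r \<and> ever_matched E v k (Suc r + i)"
      then obtain k where k: "1 \<le> k" "k \<le> r" "ever_matched E v k (Suc r + i)" by blast
      have "Suc r + i = Suc (r + pos P (k - 1))" using uniqk[OF k] .
      then have "i = pos P (k - 1)" by simp
      moreover have "P (pos P (k - 1))" using posP[of "k - 1"] k by simp
      ultimately show False using False by simp
    qed
    have "g (Suc r + i) = Pl (v (Suc (r + i)))" unfolding g_def using ne by simp
    also have "\<dots> = Pl (cls (u ! i))" using vfut[OF that] isp by simp
    also have "\<dots> = u ! i" using letter_Pl[OF isp] by simp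
    finally show ?thesis .
  qed
  have "Fstate E v r = u"
    unfolding FS
  proof (rule nth_equalityI)
    show "length (map g [Suc r..<Suc (r + L)]) = length u" unfolding L_def by (simp del: upt_Suc)
    fix i assume "i < length (map g [Suc r..<Suc (r + L)])"
    then have iL: "i < L" by (simp del: upt_Suc)
    then have "map g [Suc r..<Suc (r + L)] ! i = g (Suc r + i)" by (subst nth_map_upt) (auto simp del: upt_Suc)
    then show "map g [Suc r..<Suc (r + L)] ! i = u ! i" using gi[OF iL] by simp
  qed
  then show ?thesis using vV Fd by blast
qed



context fc begin
lemma matched_mono: "matched_by E v n k l \<Longrightarrow> n \<le> n' \<Longrightarrow> matched_by E v n' k l"
  unfolding matched_by_def using M_mono by blast
lemma matched_sym: "matched_by E v n k l \<longleftrightarrow> matched_by E v n l k"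
  unfolding matched_by_def by blast
lemma hd_min: "Q n \<noteq> [] \<Longrightarrow> q \<in> set (Q n) \<Longrightarrow> fst (hd (Q n)) \<le> fst q"
proof -
  assume a: "Q n \<noteq> []" "q \<in> set (Q n)"
  have s: "sorted_wrt (\<lambda>p q. fst p < fst q) (Q n)" by (rule sortedQ)
  obtain x xs where "Q n = x # xs" using a(1) by (cases "Q n") auto
  then show ?thesis using s a(2) by auto
qed
lemma pair_of_matched: "matched_by E v n k l \<Longrightarrow> k < l \<Longrightarrow> (k, l) \<in> set (M n)"
  unfolding matched_by_def using Mb by fastforce
lemma matched_find: "matched_by E v n k l \<Longrightarrow> k < l \<Longrightarrow>
   1 \<le> k \<and> l \<le> n \<and> find (\<lambda>p. E (snd p) (v l)) (Q (l - 1)) = Some (k, v k)"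
  using pair_of_matched pair_at by blast
end

lemma B_suff:
  fixes V :: "'a set" and E :: "'a \<Rightarrow> 'a \<Rightarrow> bool"
  assumes symE: "\<And>x y. E x y \<Longrightarrow> E y x" and irr: "\<And>x. \<not> E x x"
    and nbr: "\<And>b. b \<in> V \<Longrightarrow> \<exists>c\<in>V. E b c" and Vne: "V \<noteq> {}"
    and PBw: "PB V E w"
  shows "\<exists>v n. (\<forall>i. v i \<in> V) \<and> Bstate E v n = w"
proof (cases "w = []")
  case True
  obtain x where x: "x \<in> V" using Vne by blast
  show ?thesis
    by (rule exI[of _ "\<lambda>_. x"], rule exI[of _ 0]) (simp add: x True Bstate_def)
next
  case False
  define L where "L = length w"
  have L0: "0 < L" using False unfolding L_def by simp
  define lt where "lt = (\<lambda>p. cls (w ! p))"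
  have hdPl: "isPl (w ! 0)" using PBw False unfolding PB_def by (simp add: hd_conv_nth)
  have clsV: "\<And>p. p < L \<Longrightarrow> lt p \<in> V" using PBw False unfolding PB_def L_def lt_def by auto
  have pw: "\<And>i j. i < j \<Longrightarrow> j < L \<Longrightarrow> isPl (w ! i) \<Longrightarrow> \<not> E (lt i) (lt j)"
    using PBw False unfolding PB_def L_def lt_def by blast
  have pw': "\<And>i j. i < j \<Longrightarrow> j < L \<Longrightarrow> isPl (w ! i) \<Longrightarrow> \<not> E (lt j) (lt i)"
    using pw symE by blast
  define nb where "nb = (\<lambda>b. SOME c. c \<in> V \<and> E b c)"
  have nbp: "nb b \<in> V \<and> E b (nb b)" if "b \<in> V" for b
  proof -
    have "\<exists>c. c \<in> V \<and> E b c" using nbr[OF that] by blast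
    then show ?thesis unfolding nb_def by (rule someI_ex)
  qed
  define x0 where "x0 = lt 0"
  have x0V: "x0 \<in> V" using clsV[OF L0] unfolding x0_def .
  define T where "T = (\<lambda>p. p < L \<and> \<not> isPl (w ! p))"
  define r where "r = cnt T L"
  define D where "D = (\<lambda>i. pos T (r - i))"
  define sc where "sc = (\<lambda>p. r - cnt T p)"
  have DS1: "1 \<le> sc p \<and> sc p \<le> r \<and> D (sc p) = p" if "T p" for p
  proof -
    have pL: "p < L" using that unfolding T_def by simp
    have c: "cnt T p < r" unfolding r_def using cnt_strict[of p L T] pL that by simp
    then have "r - (r - cnt T p) = cnt T p" by simp
    then show ?thesis using c pos_cnt[of T p, OF that] unfolding sc_def D_def by simp
  qed
  have DS2: "T (D i) \<and> sc (D i) = i" if "1 \<le> i" "i \<le> r" for i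
  proof -
    have "r - i < cnt T L" using that unfolding r_def by simp
    then have "T (pos T (r - i)) \<and> cnt T (pos T (r - i)) = r - i" using pos_spec by blast
    then show ?thesis using that unfolding D_def sc_def by simp
  qed
  have DS3: "p < q \<longleftrightarrow> sc q < sc p" if "T p" "T q" for p q
  proof -
    have "cnt T p < r" "cnt T q < r" using DS1[OF that(1)] DS1[OF that(2)] unfolding sc_def by auto
    then have "sc q < sc p \<longleftrightarrow> cnt T p < cnt T q" unfolding sc_def by auto
    then show ?thesis using cnt_less_iff[OF that] by simp
  qed
  define v' where "v' = (\<lambda>i. if 1 \<le> i \<and> i \<le> r then lt (D i) else x0)"
  have v'sc: "v' (sc p) = lt p" if "T p" for p using DS1[OF that] unfolding v'_def by simp
  interpret S: fc E v' by unfold_locales (use symE irr in blast)+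
  define U where "U = (\<lambda>p. T p \<and> sc p \<in> fst ` set (fst (run E v' r)))"
  define ps where "ps = (\<lambda>p. THE l. matched_by E v' r (sc p) l)"
  define pp where "pp = (\<lambda>p. D (ps p))"
  have PP1: "matched_by E v' r (sc p) (ps p) \<and> 1 \<le> ps p \<and> ps p \<le> r \<and> ps p \<noteq> sc p"
    if "T p" "\<not> U p" for p
  proof -
    have "sc p \<notin> fst ` set (fst (run E v' r))" using that unfolding U_def by blast
    then have "sc p \<in> itemsM (snd (run E v' r))" using S.inQ_iff[of "sc p" r] DS1[OF that(1)] by blast
    then obtain l where l: "matched_by E v' r (sc p) l" using S.items_iff by blast
    have "ps p = l" unfolding ps_def using l S.matched_unique by blast
    moreover have "1 \<le> l \<and> l \<le> r \<and> l \<noteq> sc p"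
    proof -
      have "(sc p, l) \<in> set (snd (run E v' r)) \<or> (l, sc p) \<in> set (snd (run E v' r))"
        using l unfolding matched_by_def .
      then show ?thesis using S.Mb by fastforce
    qed
    ultimately show ?thesis using l by simp
  qed
  have PP2: "T (pp p) \<and> sc (pp p) = ps p \<and> \<not> U (pp p) \<and> pp (pp p) = p \<and> pp p \<noteq> p"
    if "T p" "\<not> U p" for p
  proof -
    have a: "matched_by E v' r (sc p) (ps p)" "1 \<le> ps p" "ps p \<le> r" "ps p \<noteq> sc p" using PP1[OF that] by auto
    have d: "T (D (ps p)) \<and> sc (D (ps p)) = ps p" using DS2[OF a(2,3)] .
    have m2: "matched_by E v' r (ps p) (sc p)" using a(1) S.matched_sym by blast
    have nU: "\<not> U (pp p)"
    proof
      assume "U (pp p)"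
      then have "ps p \<in> fst ` set (fst (run E v' r))" using d unfolding U_def pp_def by simp
      then have "ps p \<notin> itemsM (snd (run E v' r))" using S.disj by blast
      then show False using m2 S.items_iff by blast
    qed
    have scpp: "sc (pp p) = ps p" using d unfolding pp_def by simp
    have "ps (pp p) = (THE l. matched_by E v' r (sc (pp p)) l)" unfolding ps_def by simp
    also have "\<dots> = (THE l. matched_by E v' r (ps p) l)" unfolding scpp ..
    also have "\<dots> = sc p"
    proof (rule the_equality)
      show "matched_by E v' r (ps p) (sc p)" by (rule m2)
      fix l assume "matched_by E v' r (ps p) l"
      then show "l = sc p" using S.matched_unique m2 by blast
    qed
    finally have "ps (pp p) = sc p" .
    then have "pp (pp p) = p" using DS1[OF that(1)] unfolding pp_def by simp
    moreover have "pp p \<noteq> p" using d a(4) unfolding pp_def by auto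
    ultimately show ?thesis using d nU unfolding pp_def by simp
  qed
  have ppL: "pp p < L" if "T p" "\<not> U p" for p using PP2[OF that] unfolding T_def by simp
  have PPpair: "(sc (pp p), sc p) \<in> set (snd (run E v' r))" if "T p" "\<not> U p" "p < pp p" for p
  proof -
    have a: "matched_by E v' r (sc p) (ps p)" using PP1[OF that(1,2)] by blast
    have b: "sc (pp p) = ps p" "T (pp p)" using PP2[OF that(1,2)] by auto
    have "sc (pp p) < sc p" using DS3[OF that(1) b(2)] that(3) by simp
    then show ?thesis using S.pair_of_matched[of r "sc (pp p)" "sc p"] a b S.matched_sym by simp
  qed
  have G1: "\<not> E (lt q) (lt q')" if "U q" "U q'" for q q'
  proof -
    have "(sc q, v' (sc q)) \<in> set (fst (run E v' r))" "(sc q', v' (sc q')) \<in> set (fst (run E v' r))"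
      using that S.inQ unfolding U_def by auto
    from S.indep[OF this] show ?thesis using v'sc that unfolding U_def by simp
  qed
  have G2: "\<not> E (lt q) (lt (pp s))" if "T s" "\<not> U s" "pp s < s" "U q" "s < q" for s q
  proof -
    define i where "i = sc (pp s)"
    define j where "j = sc s"
    have Tp: "T (pp s)" "pp (pp s) = s" "\<not> U (pp s)" using PP2[OF that(1,2)] by auto
    have pr: "(j, i) \<in> set (snd (run E v' r))" using PPpair[OF Tp(1) Tp(3)] Tp(2) that(3) unfolding i_def j_def by simp
    have f: "find (\<lambda>p. E (snd p) (v' i)) (fst (run E v' (i - 1))) = Some (j, v' j)" "j < i" "i \<le> r"
      using S.pair_at[OF pr] by auto
    have Tq: "T q" using that(4) unfolding U_def by simp
    have qj: "sc q < j" using DS3[OF that(1) Tq] that(5) unfolding j_def by simp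
    have "sc q \<in> fst ` set (fst (run E v' r))" using that(4) unfolding U_def by blast
    then have "sc q \<in> fst ` set (fst (run E v' (i - 1)))" using S.persist[of "sc q" r "i - 1"] qj f by simp
    then have qin: "(sc q, v' (sc q)) \<in> set (fst (run E v' (i - 1)))" using S.inQ by blast
    have "\<not> E (snd (sc q, v' (sc q))) (v' i)"
      using find_before[of E "v' i" "fst (run E v' (i - 1))", OF f(1) S.sortedQ qin] qj by simp
    then show ?thesis using v'sc[OF Tq] v'sc[OF Tp(1)] unfolding i_def by simp
  qed
  have G3: "\<not> E (lt (pp p)) (lt (pp s))"
    if "T s" "\<not> U s" "pp s < s" "T p" "\<not> U p" "p < pp s" "s < pp p" for s p
  proof -
    define i where "i = sc (pp s)"
    define j where "j = sc s"
    have Tp: "T (pp s)" "pp (pp s) = s" "\<not> U (pp s)" using PP2[OF that(1,2)] by auto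
    have pr: "(j, i) \<in> set (snd (run E v' r))" using PPpair[OF Tp(1) Tp(3)] Tp(2) that(3) unfolding i_def j_def by simp
    have f: "find (\<lambda>p. E (snd p) (v' i)) (fst (run E v' (i - 1))) = Some (j, v' j)" "j < i" "i \<le> r"
      using S.pair_at[OF pr] by auto
    have Tpp: "T (pp p)" using PP2[OF that(4,5)] by simp
    have pl: "p < pp p" using that by simp
    have pr2: "(sc (pp p), sc p) \<in> set (snd (run E v' r))" using PPpair[OF that(4,5) pl] .
    have j2j: "sc (pp p) < j" using DS3[OF that(1) Tpp] that(7) unfolding j_def by simp
    have i2i: "i < sc p" using DS3[OF that(4) Tp(1)] that(6) unfolding i_def by simp
    have "sc (pp p) \<in> fst ` set (fst (run E v' (i - 1)))"
      using S.waiting[OF pr2, of "i - 1"] j2j f(2) i2i by simp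
    then have qin: "(sc (pp p), v' (sc (pp p))) \<in> set (fst (run E v' (i - 1)))" using S.inQ by blast
    have "\<not> E (snd (sc (pp p), v' (sc (pp p)))) (v' i)"
      using find_before[of E "v' i" "fst (run E v' (i - 1))", OF f(1) S.sortedQ qin] j2j by simp
    then show ?thesis using v'sc[OF Tpp] v'sc[OF Tp(1)] unfolding i_def by simp
  qed
  have G4: "\<not> E (lt q) (lt (pp s))" if "T s" "\<not> U s" "s < pp s" "U q" "s < q" for s q
  proof -
    define i where "i = sc s"
    define j where "j = sc (pp s)"
    have Tp: "T (pp s)" using PP2[OF that(1,2)] by auto
    have pr: "(j, i) \<in> set (snd (run E v' r))" using PPpair[OF that(1,2,3)] unfolding i_def j_def by simp
    have ji: "j < i" "i \<le> r" using S.pair_at[OF pr] by auto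
    have jin: "j \<in> fst ` set (fst (run E v' (i - 1)))" using S.waiting[OF pr, of "i - 1"] ji by simp
    have Tq: "T q" using that(4) unfolding U_def by simp
    have qi: "sc q < i" using DS3[OF that(1) Tq] that(5) unfolding i_def by simp
    have "sc q \<in> fst ` set (fst (run E v' r))" using that(4) unfolding U_def by blast
    then have "sc q \<in> fst ` set (fst (run E v' (i - 1)))" using S.persist[of "sc q" r "i - 1"] qi ji by simp
    from S.indep[OF S.inQ[OF this] S.inQ[OF jin]] show ?thesis
      using v'sc[OF Tq] v'sc[OF Tp] unfolding j_def by simp
  qed
  have G5: "\<not> E (lt (pp p)) (lt (pp s))"
    if "T s" "\<not> U s" "s < pp s" "T p" "\<not> U p" "p < s" "s < pp p" for s p
  proof -
    define i where "i = sc s"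
    define j where "j = sc (pp s)"
    have Tp: "T (pp s)" using PP2[OF that(1,2)] by auto
    have pr: "(j, i) \<in> set (snd (run E v' r))" using PPpair[OF that(1,2,3)] unfolding i_def j_def by simp
    have ji: "j < i" "i \<le> r" using S.pair_at[OF pr] by auto
    have jin: "j \<in> fst ` set (fst (run E v' (i - 1)))" using S.waiting[OF pr, of "i - 1"] ji by simp
    have Tpp: "T (pp p)" using PP2[OF that(4,5)] by simp
    have pl: "p < pp p" using that by simp
    have pr2: "(sc (pp p), sc p) \<in> set (snd (run E v' r))" using PPpair[OF that(4,5) pl] .
    have j2i: "sc (pp p) < i" using DS3[OF that(1) Tpp] that(7) unfolding i_def by simp
    have i2i: "i < sc p" using DS3[OF that(4) that(1)] that(6) unfolding i_def by simp
    have j2in: "sc (pp p) \<in> fst ` set (fst (run E v' (i - 1)))"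
      using S.waiting[OF pr2, of "i - 1"] j2i i2i by simp
    from S.indep[OF S.inQ[OF j2in] S.inQ[OF jin]] show ?thesis
      using v'sc[OF Tpp] v'sc[OF Tp] unfolding j_def by simp
  qed
  have G6: "E (lt s) (lt (pp s))" if "T s" "\<not> U s" for s
  proof (cases "s < pp s")
    case True
    have pr: "(sc (pp s), sc s) \<in> set (snd (run E v' r))" using PPpair[OF that True] .
    have "find (\<lambda>p. E (snd p) (v' (sc s))) (fst (run E v' (sc s - 1))) = Some (sc (pp s), v' (sc (pp s)))"
      using S.pair_at[OF pr] by blast
    then have "E (v' (sc (pp s))) (v' (sc s))" using find_found by fastforce
    moreover have "v' (sc (pp s)) = lt (pp s)" using v'sc PP2[OF that] by blast
    moreover have "v' (sc s) = lt s" using v'sc that by blast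
    ultimately have "E (lt (pp s)) (lt s)" by simp
    then show ?thesis by (rule symE)
  next
    case False
    have Tp: "T (pp s)" "pp (pp s) = s" "\<not> U (pp s)" "pp s \<noteq> s" using PP2[OF that] by auto
    then have lt': "pp s < pp (pp s)" using False by simp
    have pr: "(sc (pp (pp s)), sc (pp s)) \<in> set (snd (run E v' r))" using PPpair[OF Tp(1) Tp(3) lt'] .
    have "find (\<lambda>p. E (snd p) (v' (sc (pp s)))) (fst (run E v' (sc (pp s) - 1))) = Some (sc (pp (pp s)), v' (sc (pp (pp s))))"
      using S.pair_at[OF pr] by blast
    then have "E (v' (sc (pp (pp s)))) (v' (sc (pp s)))" using find_found by fastforce
    moreover have "v' (sc (pp (pp s))) = lt s" using v'sc Tp that by simp
    moreover have "v' (sc (pp s)) = lt (pp s)" using v'sc Tp by blast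
    ultimately show ?thesis by simp
  qed
    have UT: "T p" if "U p" for p using that unfolding U_def by simp
  define K where "K = cnt U L"
  have posU: "U (pos U k) \<and> cnt U (pos U k) = k \<and> pos U k < L" if "k < K" for k
    using pos_spec[of k U L] that unfolding K_def by blast
  define wc where "wc = (\<lambda>p. if isPl (w ! p) then lt p else if U p then nb (lt p) else lt (pp p))"
  define v where "v = (\<lambda>t. if 1 \<le> t \<and> t \<le> K then lt (pos U (t - 1))
      else if K < t \<and> t \<le> K + L then wc (t - K - 1) else x0)"
  have vpre: "v t = lt (pos U (t - 1))" if "1 \<le> t" "t \<le> K" for t using that unfolding v_def by simp
  have vwin: "v (Suc (K + p)) = wc p" if "p < L" for p using that unfolding v_def by simp
  have vV: "\<forall>t. v t \<in> V"
  proof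
    fix t
    show "v t \<in> V"
    proof (cases "1 \<le> t \<and> t \<le> K")
      case True
      then have "t - 1 < K" by linarith
      then show ?thesis using True posU clsV vpre by simp
    next
      case f1: False
      show ?thesis
      proof (cases "K < t \<and> t \<le> K + L")
        case True
        then have tl: "t - K - 1 < L" by linarith
        have "v t = wc (t - K - 1)" using True f1 unfolding v_def by auto
        moreover have "wc (t - K - 1) \<in> V"
        proof -
          have "lt (t - K - 1) \<in> V" using clsV[OF tl] .
          moreover have "lt (pp (t - K - 1)) \<in> V" if "T (t - K - 1)" "\<not> U (t - K - 1)"
            using clsV[OF ppL[OF that]] .
          ultimately show ?thesis unfolding wc_def using nbp tl unfolding T_def by auto
        qed
        ultimately show ?thesis by simp
      next
        case False
        then have "v t = x0" using f1 unfolding v_def by auto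
        then show ?thesis using x0V by simp
      qed
    qed
  qed
  interpret B: fc E v by unfold_locales (use symE irr in blast)+
  have phase1: "fst ` set (fst (run E v t)) = {1..t}" if "t \<le> K" for t
    using that
  proof (induction t)
    case 0 then show ?case by simp
  next
    case (Suc t)
    have "\<forall>x\<in>fst ` set (fst (run E v t)). \<not> E (v x) (v (Suc t))"
    proof
      fix x assume "x \<in> fst ` set (fst (run E v t))"
      then have x: "1 \<le> x" "x \<le> t" using Suc by auto
      have u1: "U (pos U (x - 1))" "cnt U (pos U (x - 1)) = x - 1" using posU[of "x - 1"] x Suc.prems by auto
      have u2: "U (pos U t)" "cnt U (pos U t) = t" using posU[of t] Suc.prems by auto
      have "\<not> E (lt (pos U (x - 1))) (lt (pos U t))" using G1[OF u1(1) u2(1)] .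
      moreover have "v x = lt (pos U (x - 1))" using vpre x Suc.prems by simp
      moreover have "v (Suc t) = lt (pos U t)" using vpre Suc.prems by simp
      ultimately show "\<not> E (v x) (v (Suc t))" by simp
    qed
    then have "fst ` set (fst (run E v (Suc t))) = insert (Suc t) (fst ` set (fst (run E v t)))" by (rule B.step_none)
    then show ?case using Suc by auto
  qed
  define Wn where "Wn = (\<lambda>s p. p < s \<and> (isPl (w ! p) \<or> (T p \<and> \<not> U p \<and> s \<le> pp p)))"
  define Pre where "Pre = (\<lambda>s. {t. 1 \<le> t \<and> t \<le> K \<and> cnt U s < t})"
  define Set where "Set = (\<lambda>s. Pre s \<union> (\<lambda>p. Suc (K + p)) ` {p. Wn s p})"
  define pB where "pB = (\<lambda>p. if U p then Suc (cnt U p) else Suc (K + pp p))"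
  have prefix: "U (pos U (x - 1)) \<and> s \<le> pos U (x - 1) \<and> v x = lt (pos U (x - 1)) \<and> pos U (x - 1) < L"
    if "x \<in> Pre s" for x s
  proof -
    have x: "1 \<le> x" "x \<le> K" "cnt U s < x" using that unfolding Pre_def by auto
    have u: "U (pos U (x - 1))" "cnt U (pos U (x - 1)) = x - 1" "pos U (x - 1) < L" using posU[of "x - 1"] x by auto
    have "\<not> pos U (x - 1) < s"
    proof
      assume "pos U (x - 1) < s"
      then have "cnt U (pos U (x - 1)) < cnt U s" using cnt_strict u(1) by blast
      then show False using u(2) x(3) by simp
    qed
    then show ?thesis using u vpre x by simp
  qed
  have PreL: "Pre L = {}" unfolding Pre_def K_def by auto
  have Pre_le: "x \<le> K" if "x \<in> Pre s" for x s using that unfolding Pre_def by simp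
  have injS: "Suc (K + p) = Suc (K + q) \<longleftrightarrow> p = q" for p q by simp
  have winK: "Suc (K + p) \<notin> Pre s" for p s using Pre_le by fastforce
  have phase2: "fst ` set (fst (run E v (K + s))) = Set s \<and>
     (\<forall>p. T p \<longrightarrow> p < s \<longrightarrow> (U p \<or> pp p < s) \<longrightarrow> matched_by E v (K + s) (Suc (K + p)) (pB p))"
    if "s \<le> L" for s
    using that
  proof (induction s)
    case 0
    have "Set 0 = {1..K}" unfolding Set_def Pre_def Wn_def by auto
    then show ?case using phase1[of K] by simp
  next
    case (Suc s)
    have sL: "s < L" using Suc.prems by simp
    have IH1: "fst ` set (fst (run E v (K + s))) = Set s" using Suc by auto
    have IH2: "\<forall>p. T p \<longrightarrow> p < s \<longrightarrow> (U p \<or> pp p < s) \<longrightarrow> matched_by E v (K + s) (Suc (K + p)) (pB p)"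
      using Suc by auto
    have ks: "K + Suc s = Suc (K + s)" by simp
    have IH2': "matched_by E v (K + Suc s) (Suc (K + p)) (pB p)"
      if "T p" "p < s" "U p \<or> pp p < s" for p
      using B.matched_mono[of "K + s" "Suc (K + p)" "pB p" "K + Suc s"] IH2 that by simp
    have vt: "v (Suc (K + s)) = wc s" using vwin[OF sL] .
    show ?case
    proof (cases "isPl (w ! s)")
      case True
      have nT: "\<not> T s" using True unfolding T_def by simp
      have nU: "\<not> U s" using nT UT by blast
      have vts: "v (Suc (K + s)) = lt s" using vt True unfolding wc_def by simp
      have noE: "\<forall>x\<in>Set s. \<not> E (v x) (v (Suc (K + s)))"
      proof
        fix x assume "x \<in> Set s"
        then have "x \<in> Pre s \<or> (\<exists>p. Wn s p \<and> x = Suc (K + p))" unfolding Set_def by blast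
        then show "\<not> E (v x) (v (Suc (K + s)))"
        proof
          assume xp: "x \<in> Pre s"
          define q where "q = pos U (x - 1)"
          have q: "U q" "s \<le> q" "v x = lt q" "q < L" using prefix[OF xp] unfolding q_def by auto
          have "q \<noteq> s" using q(1) nU by blast
          then have "s < q" using q(2) by simp
          then show ?thesis using pw'[OF _ q(4) True] q vts by simp
        next
          assume "\<exists>p. Wn s p \<and> x = Suc (K + p)"
          then obtain p where p: "Wn s p" "x = Suc (K + p)" by blast
          have ps': "p < s" using p(1) unfolding Wn_def by simp
          show ?thesis
          proof (cases "isPl (w ! p)")
            case True
            then have "v x = lt p" using vwin[of p] ps' sL p(2) unfolding wc_def by simp
            then show ?thesis using pw[OF ps' sL True] vts by simp
          next
            case False
            then have pT: "T p" "\<not> U p" "s \<le> pp p" using p(1) unfolding Wn_def by auto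
            have vx: "v x = lt (pp p)" using vwin[of p] ps' sL p(2) False pT unfolding wc_def by simp
            have "pp p \<noteq> s" using PP2[OF pT(1,2)] nT by auto
            then have "s < pp p" using pT(3) by simp
            then show ?thesis using pw'[OF _ ppL[OF pT(1,2)] True] vx vts by simp
          qed
        qed
      qed
      have st: "fst ` set (fst (run E v (Suc (K + s)))) = insert (Suc (K + s)) (Set s)"
        using B.step_none[of "K + s"] noE IH1 by simp
      have W: "{p. Wn (Suc s) p} = insert s {p. Wn s p}"
      proof (rule set_eqI)
        fix p
        have "pp p \<noteq> s" if "T p" "\<not> U p" using PP2[OF that] nT by auto
        then show "p \<in> {p. Wn (Suc s) p} \<longleftrightarrow> p \<in> insert s {p. Wn s p}"
          unfolding Wn_def using True by (auto simp: less_Suc_eq)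
      qed
      have P: "Pre (Suc s) = Pre s" unfolding Pre_def using cnt_Suc[of U s] nU by simp
      have S1: "Set (Suc s) = insert (Suc (K + s)) (Set s)" unfolding Set_def W P by simp
      have M: "\<forall>p. T p \<longrightarrow> p < Suc s \<longrightarrow> (U p \<or> pp p < Suc s) \<longrightarrow> matched_by E v (K + Suc s) (Suc (K + p)) (pB p)"
      proof (intro allI impI)
        fix p assume a: "T p" "p < Suc s" "U p \<or> pp p < Suc s"
        have "p \<noteq> s" using a(1) nT by blast
        then have ps': "p < s" using a(2) by simp
        have "U p \<or> pp p < s"
        proof (cases "U p")
          case False
          then have "pp p \<noteq> s" using PP2[OF a(1) False] nT by auto
          then show ?thesis using a(3) \<open>\<not> U p\<close> by simp
        qed simp
        then show "matched_by E v (K + Suc s) (Suc (K + p)) (pB p)" using IH2' a(1) ps' by blast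
      qed
      show ?thesis using st S1 M ks by simp
    next
      case notPl: False
      have Ts: "T s" using notPl sL unfolding T_def by simp
      show ?thesis
      proof (cases "U s")
        case True
        define x where "x = Suc (cnt U s)"
        have cK: "cnt U s < K" unfolding K_def using cnt_strict[of s L U] sL True by simp
        have xP: "x \<in> Pre s" unfolding Pre_def x_def using cK by simp
        have xS: "x \<in> Set s" using xP unfolding Set_def by blast
        have vx: "v x = lt s" using vpre[of x] cK pos_cnt[of U s, OF True] unfolding x_def by simp
        have vts: "v (Suc (K + s)) = nb (lt s)" using vt notPl True unfolding wc_def by simp
        have E1: "E (v x) (v (Suc (K + s)))" using vx vts nbp clsV[OF sL] by simp
        have mn: "\<forall>t'\<in>Set s. t' < x \<longrightarrow> \<not> E (v t') (v (Suc (K + s)))"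
        proof (intro ballI impI)
          fix t' assume t': "t' \<in> Set s" "t' < x"
          have "t' \<notin> Pre s" using t'(2) unfolding Pre_def x_def by auto
          moreover have "t' \<notin> (\<lambda>p. Suc (K + p)) ` {p. Wn s p}" using t'(2) cK unfolding x_def by auto
          ultimately show "\<not> E (v t') (v (Suc (K + s)))" using t'(1) unfolding Set_def by blast
        qed
        have st: "fst ` set (fst (run E v (Suc (K + s)))) = Set s - {x} \<and> matched_by E v (Suc (K + s)) x (Suc (K + s))"
          using B.step_some[of x "K + s"] xS E1 mn IH1 by simp
        have W: "{p. Wn (Suc s) p} = {p. Wn s p}"
        proof (rule set_eqI)
          fix p
          have "pp p \<noteq> s" if "T p" "\<not> U p" using PP2[OF that] True by auto
          then show "p \<in> {p. Wn (Suc s) p} \<longleftrightarrow> p \<in> {p. Wn s p}"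
            unfolding Wn_def using True notPl by (auto simp: less_Suc_eq)
        qed
        have P: "Pre (Suc s) = Pre s - {x}" unfolding Pre_def x_def using cnt_Suc[of U s] True by auto
        have S1: "Set (Suc s) = Set s - {x}"
        proof -
          have "x \<notin> (\<lambda>p. Suc (K + p)) ` {p. Wn s p}" using cK unfolding x_def by auto
          then show ?thesis unfolding Set_def W P by blast
        qed
        have M: "\<forall>p. T p \<longrightarrow> p < Suc s \<longrightarrow> (U p \<or> pp p < Suc s) \<longrightarrow> matched_by E v (K + Suc s) (Suc (K + p)) (pB p)"
        proof (intro allI impI)
          fix p assume a: "T p" "p < Suc s" "U p \<or> pp p < Suc s"
          show "matched_by E v (K + Suc s) (Suc (K + p)) (pB p)"
          proof (cases "p = s")
            case True
            have "pB p = x" unfolding pB_def x_def using True \<open>U s\<close> by simp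
            then show ?thesis using st True ks B.matched_sym by simp
          next
            case False
            then have ps': "p < s" using a(2) by simp
            have "U p \<or> pp p < s"
            proof (cases "U p")
              case False
              then have "pp p \<noteq> s" using PP2[OF a(1) False] True by auto
              then show ?thesis using a(3) \<open>\<not> U p\<close> by simp
            qed simp
            then show ?thesis using IH2' a(1) ps' by blast
          qed
        qed
        show ?thesis using st S1 M ks by simp
      next
        case nU: False
        have PPs: "T (pp s)" "sc (pp s) = ps s" "\<not> U (pp s)" "pp (pp s) = s" "pp s \<noteq> s" using PP2[OF Ts nU] by auto
        have vts: "v (Suc (K + s)) = lt (pp s)" using vt notPl nU unfolding wc_def by simp
        have ppsL: "pp s < L" using ppL[OF Ts nU] .
        show ?thesis
        proof (cases "s < pp s")
          case True
          have noE: "\<forall>x\<in>Set s. \<not> E (v x) (v (Suc (K + s)))"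
          proof
            fix x assume "x \<in> Set s"
            then have "x \<in> Pre s \<or> (\<exists>p. Wn s p \<and> x = Suc (K + p))" unfolding Set_def by blast
            then show "\<not> E (v x) (v (Suc (K + s)))"
            proof
              assume xp: "x \<in> Pre s"
              define q where "q = pos U (x - 1)"
              have q: "U q" "s \<le> q" "v x = lt q" "q < L" using prefix[OF xp] unfolding q_def by auto
              have "q \<noteq> s" using q(1) nU by blast
              then have "s < q" using q(2) by simp
              then show ?thesis using G4[OF Ts nU True q(1)] q vts by simp
            next
              assume "\<exists>p. Wn s p \<and> x = Suc (K + p)"
              then obtain p where p: "Wn s p" "x = Suc (K + p)" by blast
              have ps': "p < s" using p(1) unfolding Wn_def by simp
              show ?thesis
              proof (cases "isPl (w ! p)")
                case True
                then have "v x = lt p" using vwin[of p] ps' sL p(2) unfolding wc_def by simp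
                moreover have "\<not> E (lt p) (lt (pp s))" using pw[OF _ ppsL True] ps' \<open>s < pp s\<close> by simp
                ultimately show ?thesis using vts by simp
              next
                case False
                then have pT: "T p" "\<not> U p" "s \<le> pp p" using p(1) unfolding Wn_def by auto
                have vx: "v x = lt (pp p)" using vwin[of p] ps' sL p(2) False pT unfolding wc_def by simp
                have "pp p \<noteq> s"
                proof
                  assume "pp p = s"
                  then have "p = pp s" using PP2[OF pT(1,2)] by auto
                  then show False using ps' True by simp
                qed
                then have "s < pp p" using pT(3) by simp
                then show ?thesis using G5[OF Ts nU True pT(1,2) ps'] vx vts by simp
              qed
            qed
          qed
          have st: "fst ` set (fst (run E v (Suc (K + s)))) = insert (Suc (K + s)) (Set s)"
            using B.step_none[of "K + s"] noE IH1 by simp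
          have W: "{p. Wn (Suc s) p} = insert s {p. Wn s p}"
          proof (rule set_eqI)
            fix p
            have "pp p \<noteq> s" if "T p" "\<not> U p" "p < s"
            proof
              assume "pp p = s"
              then have "p = pp s" using PP2[OF that(1,2)] by auto
              then show False using that(3) True by simp
            qed
            then show "p \<in> {p. Wn (Suc s) p} \<longleftrightarrow> p \<in> insert s {p. Wn s p}"
              unfolding Wn_def using True Ts nU by (auto simp: less_Suc_eq)
          qed
          have P: "Pre (Suc s) = Pre s" unfolding Pre_def using cnt_Suc[of U s] nU by simp
          have S1: "Set (Suc s) = insert (Suc (K + s)) (Set s)" unfolding Set_def W P by simp
          have M: "\<forall>p. T p \<longrightarrow> p < Suc s \<longrightarrow> (U p \<or> pp p < Suc s) \<longrightarrow> matched_by E v (K + Suc s) (Suc (K + p)) (pB p)"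
          proof (intro allI impI)
            fix p assume a: "T p" "p < Suc s" "U p \<or> pp p < Suc s"
            have "p \<noteq> s" using a(3) nU True by auto
            then have ps': "p < s" using a(2) by simp
            have "U p \<or> pp p < s"
            proof (cases "U p")
              case False
              have "pp p \<noteq> s"
              proof
                assume "pp p = s"
                then have "p = pp s" using PP2[OF a(1) False] by auto
                then show False using ps' True by simp
              qed
              then show ?thesis using a(3) \<open>\<not> U p\<close> by simp
            qed simp
            then show "matched_by E v (K + Suc s) (Suc (K + p)) (pB p)" using IH2' a(1) ps' by blast
          qed
          show ?thesis using st S1 M ks by simp
        next
          case False
          then have right: "pp s < s" using PPs(5) by simp
          define y where "y = Suc (K + pp s)"
          have Wy: "Wn s (pp s)" unfolding Wn_def using right PPs by simp
          have yS: "y \<in> Set s" unfolding Set_def y_def using Wy by blast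
          have vy: "v y = lt s" using vwin[OF ppsL] PPs unfolding y_def wc_def T_def by simp
          have E1: "E (v y) (v (Suc (K + s)))" using vy vts G6[OF Ts nU] by simp
          have mn: "\<forall>t'\<in>Set s. t' < y \<longrightarrow> \<not> E (v t') (v (Suc (K + s)))"
          proof (intro ballI impI)
            fix x assume xS: "x \<in> Set s" and xy: "x < y"
            from xS have "x \<in> Pre s \<or> (\<exists>p. Wn s p \<and> x = Suc (K + p))" unfolding Set_def by blast
            then show "\<not> E (v x) (v (Suc (K + s)))"
            proof
              assume xp: "x \<in> Pre s"
              define q where "q = pos U (x - 1)"
              have q: "U q" "s \<le> q" "v x = lt q" "q < L" using prefix[OF xp] unfolding q_def by auto
              have "q \<noteq> s" using q(1) nU by blast
              then have "s < q" using q(2) by simp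
              then show ?thesis using G2[OF Ts nU right q(1)] q vts by simp
            next
              assume "\<exists>p. Wn s p \<and> x = Suc (K + p)"
              then obtain p where p: "Wn s p" "x = Suc (K + p)" by blast
              have ps': "p < s" using p(1) unfolding Wn_def by simp
              have pps: "p < pp s" using xy p(2) unfolding y_def by simp
              show ?thesis
              proof (cases "isPl (w ! p)")
                case True
                then have "v x = lt p" using vwin[of p] ps' sL p(2) unfolding wc_def by simp
                moreover have "\<not> E (lt p) (lt (pp s))" using pw[OF pps ppsL True] .
                ultimately show ?thesis using vts by simp
              next
                case False
                then have pT: "T p" "\<not> U p" "s \<le> pp p" using p(1) unfolding Wn_def by auto
                have vx: "v x = lt (pp p)" using vwin[of p] ps' sL p(2) False pT unfolding wc_def by simp
                have "pp p \<noteq> s"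
                proof
                  assume "pp p = s"
                  then have "p = pp s" using PP2[OF pT(1,2)] by auto
                  then show False using pps by simp
                qed
                then have "s < pp p" using pT(3) by simp
                then show ?thesis using G3[OF Ts nU right pT(1,2) pps] vx vts by simp
              qed
            qed
          qed
          have st: "fst ` set (fst (run E v (Suc (K + s)))) = Set s - {y} \<and> matched_by E v (Suc (K + s)) y (Suc (K + s))"
            using B.step_some[of y "K + s"] yS E1 mn IH1 by simp
          have nPpp: "\<not> isPl (w ! pp s)" using PPs(1) unfolding T_def by simp
          have W: "{p. Wn (Suc s) p} = {p. Wn s p} - {pp s}"
          proof (rule set_eqI)
            fix p
            have "pp p \<noteq> s" if "T p" "\<not> U p" "p \<noteq> pp s"
            proof
              assume "pp p = s"
              then have "p = pp s" using PP2[OF that(1,2)] by auto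
              then show False using that(3) by simp
            qed
            then show "p \<in> {p. Wn (Suc s) p} \<longleftrightarrow> p \<in> {p. Wn s p} - {pp s}"
              unfolding Wn_def using False Ts nU PPs notPl nPpp by (auto simp: less_Suc_eq)
          qed
          have P: "Pre (Suc s) = Pre s" unfolding Pre_def using cnt_Suc[of U s] nU by simp
          have S1: "Set (Suc s) = Set s - {y}"
          proof -
            have "(\<lambda>p. Suc (K + p)) ` ({p. Wn s p} - {pp s}) = (\<lambda>p. Suc (K + p)) ` {p. Wn s p} - {y}"
              unfolding y_def by auto
            moreover have "y \<notin> Pre s" unfolding y_def using winK by blast
            ultimately show ?thesis unfolding Set_def W P by blast
          qed
          have M: "\<forall>p. T p \<longrightarrow> p < Suc s \<longrightarrow> (U p \<or> pp p < Suc s) \<longrightarrow> matched_by E v (K + Suc s) (Suc (K + p)) (pB p)"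
          proof (intro allI impI)
            fix p assume a: "T p" "p < Suc s" "U p \<or> pp p < Suc s"
            show "matched_by E v (K + Suc s) (Suc (K + p)) (pB p)"
            proof (cases "p = s")
              case True
              have "pB p = y" unfolding pB_def y_def using True nU by simp
              then show ?thesis using st True ks B.matched_sym by simp
            next
              case ne: False
              then have ps': "p < s" using a(2) by simp
              show ?thesis
              proof (cases "p = pp s")
                case True
                have "pB p = Suc (K + s)" unfolding pB_def using True PPs by simp
                then show ?thesis using st True ks unfolding y_def by simp
              next
                case False
                have "U p \<or> pp p < s"
                proof (cases "U p")
                  case nUp: False
                  have "pp p \<noteq> s"
                  proof
                    assume "pp p = s"
                    then have "p = pp s" using PP2[OF a(1) nUp] by auto
                    then show False using False by simp
                  qed
                  then show ?thesis using a(3) \<open>\<not> U p\<close> by simp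
                qed simp
                then show ?thesis using IH2' a(1) ps' by blast
              qed
            qed
          qed
          show ?thesis using st S1 M ks by simp
        qed
      qed
    qed
  qed
    define n where "n = K + L"
  have QS: "fst ` set (fst (run E v n)) = Set L" using phase2[of L] unfolding n_def by simp
  have MS: "matched_by E v n (Suc (K + p)) (pB p)" if "T p" for p
  proof -
    have pL: "p < L" using that unfolding T_def by simp
    have "U p \<or> pp p < L" using ppL[OF that] by blast
    moreover have "\<forall>p. T p \<longrightarrow> p < L \<longrightarrow> (U p \<or> pp p < L) \<longrightarrow> matched_by E v (K + L) (Suc (K + p)) (pB p)"
      using phase2[of L] by blast
    ultimately show ?thesis using that pL unfolding n_def by blast
  qed
  have SL: "Set L = (\<lambda>p. Suc (K + p)) ` {p. p < L \<and> isPl (w ! p)}"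
  proof -
    have "{p. Wn L p} = {p. p < L \<and> isPl (w ! p)}"
    proof (rule set_eqI)
      fix p
      have "\<not> L \<le> pp p" if "T p" "\<not> U p" using ppL[OF that] by simp
      then show "p \<in> {p. Wn L p} \<longleftrightarrow> p \<in> {p. p < L \<and> isPl (w ! p)}" unfolding Wn_def by auto
    qed
    then show ?thesis unfolding Set_def PreL by simp
  qed
  have K1: "Suc K \<in> fst ` set (fst (run E v n))" unfolding QS SL using hdPl L0 by force
  have Qne: "fst (run E v n) \<noteq> []" using K1 by auto
  have hdK: "fst (hd (fst (run E v n))) = Suc K"
  proof -
    have h: "hd (fst (run E v n)) \<in> set (fst (run E v n))" using Qne by simp
    have "fst (hd (fst (run E v n))) \<le> fst (Suc K, v (Suc K))" using B.hd_min[OF Qne B.inQ[OF K1]] .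
    moreover have "fst (hd (fst (run E v n))) \<in> Set L" using h QS by blast
    then have "Suc K \<le> fst (hd (fst (run E v n)))" unfolding SL by auto
    ultimately show ?thesis by simp
  qed
  define f where "f = (\<lambda>t. if \<exists>l. matched_by E v n t l
                     then Ti (v (THE l. matched_by E v n t l)) else Pl (v t))"
  have BS: "Bstate E v n = map f [Suc K ..< Suc n]" unfolding Bstate_def f_def using Qne hdK by simp
  have fi: "f (Suc K + p) = w ! p" if pL: "p < L" for p
  proof (cases "isPl (w ! p)")
    case True
    have "Suc (K + p) \<in> fst ` set (fst (run E v n))" unfolding QS SL using True pL by blast
    then have "Suc (K + p) \<notin> itemsM (snd (run E v n))" using B.disj by blast
    then have nm: "\<not> (\<exists>l. matched_by E v n (Suc (K + p)) l)" using B.items_iff by blast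
    have "f (Suc K + p) = Pl (v (Suc (K + p)))" unfolding f_def using nm by simp
    also have "\<dots> = Pl (lt p)" using vwin[OF pL] True unfolding wc_def by simp
    also have "\<dots> = w ! p" using letter_Pl[OF True] unfolding lt_def by simp
    finally show ?thesis .
  next
    case False
    have Tp: "T p" using False pL unfolding T_def by simp
    have m: "matched_by E v n (Suc (K + p)) (pB p)" using MS[OF Tp] .
    have th: "(THE l. matched_by E v n (Suc (K + p)) l) = pB p"
    proof (rule the_equality)
      show "matched_by E v n (Suc (K + p)) (pB p)" by (rule m)
      fix l assume "matched_by E v n (Suc (K + p)) l"
      then show "l = pB p" using B.matched_unique m by blast
    qed
    have vp: "v (pB p) = lt p"
    proof (cases "U p")
      case True
      have cK: "cnt U p < K" unfolding K_def using cnt_strict[of p L U] pL True by simp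
      have "v (pB p) = lt (pos U (cnt U p))" unfolding pB_def using True vpre[of "Suc (cnt U p)"] cK by simp
      then show ?thesis using pos_cnt[of U p, OF True] by simp
    next
      case nU: False
      have P2: "T (pp p)" "\<not> U (pp p)" "pp (pp p) = p" using PP2[OF Tp nU] by auto
      have "v (pB p) = wc (pp p)" unfolding pB_def using nU vwin[OF ppL[OF Tp nU]] by simp
      also have "\<dots> = lt p" unfolding wc_def using P2 unfolding T_def by simp
      finally show ?thesis .
    qed
    have "f (Suc K + p) = Ti (v (pB p))" unfolding f_def using m th by auto
    also have "\<dots> = w ! p" using vp letter_Ti[OF False] unfolding lt_def by simp
    finally show ?thesis .
  qed
  have "Bstate E v n = w"
    unfolding BS
  proof (rule nth_equalityI)
    show "length (map f [Suc K..<Suc n]) = length w" unfolding n_def L_def by (simp del: upt_Suc)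
    fix i assume "i < length (map f [Suc K..<Suc n])"
    then have iL: "i < L" unfolding n_def by (simp del: upt_Suc)
    then have "map f [Suc K..<Suc n] ! i = f (Suc K + i)" unfolding n_def by (subst nth_map_upt) (auto simp del: upt_Suc)
    then show "map f [Suc K..<Suc n] ! i = w ! i" using fi[OF iL] by simp
  qed
  then show ?thesis using vV by blast
qed

lemma cls_tilde[simp]: "cls (tilde x) = cls x" by (cases x) auto
lemma isPl_tilde[simp]: "isPl (tilde x) = (\<not> isPl x)" by (cases x) auto
lemma tilde_tilde[simp]: "tilde (tilde x) = x" by (cases x) auto

lemma PB_PF:
  assumes symE: "\<And>x y. E x y \<Longrightarrow> E y x"
  shows "PB V E w \<longleftrightarrow> PF V E (rev (map tilde w))"
proof (cases "w = []")
  case True then show ?thesis unfolding PB_def PF_def by simp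
next
  case False
  define L where "L = length w"
  let ?u = "rev (map tilde w)"
  have lu: "length ?u = L" unfolding L_def by simp
  have un: "?u ! i = tilde (w ! (L - 1 - i))" if "i < L" for i
    using that unfolding L_def by (simp add: rev_nth)
  have last: "last ?u = tilde (hd w)" using False by (simp add: last_rev hd_map)
  have sets: "(\<forall>x\<in>set ?u. cls x \<in> V) \<longleftrightarrow> (\<forall>x\<in>set w. cls x \<in> V)" by simp
  have pw: "(\<forall>i j. i < j \<longrightarrow> j < length w \<longrightarrow> isPl (w ! i) \<longrightarrow> \<not> E (cls (w ! i)) (cls (w ! j))) \<longleftrightarrow>
            (\<forall>i j. i < j \<longrightarrow> j < length ?u \<longrightarrow> \<not> isPl (?u ! j) \<longrightarrow> \<not> E (cls (?u ! i)) (cls (?u ! j)))"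
  proof
    assume H: "\<forall>i j. i < j \<longrightarrow> j < length w \<longrightarrow> isPl (w ! i) \<longrightarrow> \<not> E (cls (w ! i)) (cls (w ! j))"
    show "\<forall>i j. i < j \<longrightarrow> j < length ?u \<longrightarrow> \<not> isPl (?u ! j) \<longrightarrow> \<not> E (cls (?u ! i)) (cls (?u ! j))"
    proof (intro allI impI)
      fix i j assume ij: "i < j" "j < length ?u" "\<not> isPl (?u ! j)"
      have a: "L - 1 - j < L - 1 - i" "L - 1 - i < length w" using ij lu unfolding L_def by auto
      have b: "isPl (w ! (L - 1 - j))" using ij(3) un[of j] ij lu by simp
      have "\<not> E (cls (w ! (L - 1 - j))) (cls (w ! (L - 1 - i)))" using H a b by blast
      then have "\<not> E (cls (w ! (L - 1 - i))) (cls (w ! (L - 1 - j)))" using symE by blast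
      then show "\<not> E (cls (?u ! i)) (cls (?u ! j))" using un[of i] un[of j] ij lu by simp
    qed
  next
    assume H: "\<forall>i j. i < j \<longrightarrow> j < length ?u \<longrightarrow> \<not> isPl (?u ! j) \<longrightarrow> \<not> E (cls (?u ! i)) (cls (?u ! j))"
    show "\<forall>i j. i < j \<longrightarrow> j < length w \<longrightarrow> isPl (w ! i) \<longrightarrow> \<not> E (cls (w ! i)) (cls (w ! j))"
    proof (intro allI impI)
      fix i j assume ij: "i < j" "j < length w" "isPl (w ! i)"
      have a: "L - 1 - j < L - 1 - i" "L - 1 - i < length ?u" using ij lu unfolding L_def by auto
      have ii: "L - 1 - (L - 1 - i) = i" "L - 1 - (L - 1 - j) = j" using ij unfolding L_def by auto
      have b: "\<not> isPl (?u ! (L - 1 - i))" using ij(3) un[of "L - 1 - i"] ii a lu by simp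
      have "\<not> E (cls (?u ! (L - 1 - j))) (cls (?u ! (L - 1 - i)))" using H a b by blast
      then have "\<not> E (cls (w ! j)) (cls (w ! i))" using un[of "L - 1 - i"] un[of "L - 1 - j"] ii a lu by simp
      then show "\<not> E (cls (w ! i)) (cls (w ! j))" using symE by blast
    qed
  qed
  show ?thesis unfolding PB_def PF_def using False last sets pw by simp
qed

theorem mainTheorem4:
  fixes V :: "'a set" and E :: "'a \<Rightarrow> 'a \<Rightarrow> bool"
  assumes "simple_connected_graph V E"
    and "card V \<ge> 2"
  shows "bij_betw (\<lambda>w. rev (map tilde w)) (admB V E) (admF V E)
         \<and> (\<forall>w. w \<in> admB V E \<longleftrightarrow> rev (map tilde w) \<in> admF V E)"
proof -
  have G: "finite V" "V \<noteq> {}" "\<forall>x y. E x y \<longrightarrow> x \<in> V \<and> y \<in> V" "\<forall>x y. E x y \<longrightarrow> E y x"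
     "\<forall>x. \<not> E x x" "\<forall>x\<in>V. \<forall>y\<in>V. E\<^sup>*\<^sup>* x y"
    using assms(1) unfolding simple_connected_graph_def by auto
  have symE: "\<And>x y. E x y \<Longrightarrow> E y x" using G(4) by blast
  have irr: "\<And>x. \<not> E x x" using G(5) by blast
  have nbr: "\<exists>c\<in>V. E b c" if b: "b \<in> V" for b
  proof -
    have "\<not> V \<subseteq> {b}"
    proof
      assume "V \<subseteq> {b}"
      then have "card V \<le> card {b}" by (rule card_mono[rotated]) simp
      then show False using assms(2) by simp
    qed
    then obtain y where y: "y \<in> V" "y \<noteq> b" by blast
    have "E\<^sup>*\<^sup>* b y" using G(6) b y(1) by blast
    then show ?thesis
    proof (cases rule: converse_rtranclpE)
      case base then show ?thesis using y by simp
    next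
      case (step z)
      then show ?thesis using G(3) by blast
    qed
  qed
  have admB: "admB V E = {w. PB V E w}"
  proof
    show "admB V E \<subseteq> {w. PB V E w}"
    proof
      fix w assume "w \<in> admB V E"
      then obtain v n where vn: "\<forall>i. v i \<in> V" "Bstate E v n = w" unfolding admB_def by blast
      interpret fc E v by unfold_locales (use symE irr in blast)+
      show "w \<in> {w. PB V E w}" using B_nec[of V n] vn by simp
    qed
    show "{w. PB V E w} \<subseteq> admB V E"
      using B_suff[OF symE irr nbr G(2)] unfolding admB_def by blast
  qed
  have admF: "admF V E = {w. PF V E w}"
  proof
    show "admF V E \<subseteq> {w. PF V E w}"
    proof
      fix w assume "w \<in> admF V E"
      then obtain v n where vn: "\<forall>i. v i \<in> V" "Fdefined E v n" "Fstate E v n = w" unfolding admF_def by blast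
      interpret fc E v by unfold_locales (use symE irr in blast)+
      show "w \<in> {w. PF V E w}" using F_nec[of V n] vn by simp
    qed
    show "{w. PF V E w} \<subseteq> admF V E"
      using F_suff[OF symE irr nbr G(2)] unfolding admF_def by blast
  qed
  have C2: "\<forall>w. w \<in> admB V E \<longleftrightarrow> rev (map tilde w) \<in> admF V E"
    unfolding admB admF using PB_PF[where E=E and V=V, OF symE] by simp
  have inv: "rev (map tilde (rev (map tilde w))) = w" for w :: "'a letter list"
    by (simp add: rev_map comp_def)
  have "bij_betw (\<lambda>w. rev (map tilde w)) (admB V E) (admF V E)"
  proof (rule bij_betw_imageI)
    show "inj_on (\<lambda>w. rev (map tilde w)) (admB V E)"
      by (rule inj_onI) (metis inv)
    show "(\<lambda>w. rev (map tilde w)) ` admB V E = admF V E"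
    proof
      show "(\<lambda>w. rev (map tilde w)) ` admB V E \<subseteq> admF V E" using C2 by blast
      show "admF V E \<subseteq> (\<lambda>w. rev (map tilde w)) ` admB V E"
      proof
        fix u assume u: "u \<in> admF V E"
        have "rev (map tilde u) \<in> admB V E" using C2 u inv by metis
        then show "u \<in> (\<lambda>w. rev (map tilde w)) ` admB V E" using inv by (metis image_eqI)
      qed
    qed
  qed
  then show ?thesis using C2 by blast
qed


end
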